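(* For all integers $k\ge2$, $q\ge2$ with $k+q>4$, the hypergraph colouring distribution (the point mass on $\psi_{k,q}$) satisfies SYM, BAL, MIN, POS and UNI.
   Context: $\Omega=\{1,\dots,q\}$, $\Psi_{k,q}=\{\psi_{k,q}\}$ with $\psi_{k,q}(\sigma)=1-\mathbf 1\{\sigma_1=\dots=\sigma_k\}$, and $P$ the point mass on $\psi_{k,q}$. $\boldsymbol\psi$ denotes a sample from $P$, $\xi=q^{-k}\sum_{\sigma\in\Omega^k}\mathbb E[\boldsymbol\psi(\sigma)]$, $\psi^\theta(\sigma)=\psi(\sigma_{\theta(1)},\dots,\sigma_{\theta(k)})$. SYM: for all $i\in[k]$, $\omega\in\Omega$, $\psi\in\Psi$, $\sum_{\tau\in\Omega^k}\mathbf 1\{\tau_i=\omega\}\psi(\tau)=q^{k-1}\xi$, and $P(\psi)=P(\psi^\theta)$ for every permutation $\theta$. BAL: $\phi(\mu)=\sum_{\tau\in\Omega^k}\mathbb E[\boldsymbol\psi(\tau)]\prod_{i=1}^k\mu(\tau_i)$ is concave on the distributions $\mu$ on $\Omega$ and maximised at the uniform distribution. MIN: among distributions $\rho$ on $\Omega\times\Omega$ with both marginals uniform, $\varphi(\rho)=\sum_{\sigma,\tau\in\Omega^k}\mathbb E[\boldsymbol\psi(\sigma)\boldsymbol\psi(\tau)]\prod_{i=1}^k\rho(\sigma_i,\tau_i)$ has the uniform distribution as unique global minimiser. POS: for all probability measures $\pi,\pi'$ on the distributions on $\Omega$ with mean the uniform distribution, and all $\ell\ge2$, with $\rho_i$ i.i.d.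 from $\pi$, $\rho'_i$ i.i.d. from $\pi'$, $\boldsymbol\psi$ from $P$, independent, $\mathbb E[(1-\sum_\tau\boldsymbol\psi(\tau)\prod_{i=1}^k\rho_i(\tau_i))^\ell+(k-1)(1-\sum_\tau\boldsymbol\psi(\tau)\prod_{i=1}^k\rho'_i(\tau_i))^\ell-k(1-\sum_\tau\boldsymbol\psi(\tau)\rho_1(\tau_1)\prod_{i=2}^k\rho'_i(\tau_i))^\ell]\ge0$. UNI: every CSP with constraint functions from $\Psi$ (constraint $a$ on a $k$-tuple $\partial a$ of variables) in which each constraint has pairwise distinct variables and whose bipartite variable–constraint graph is unicyclic admits $\sigma$ with $\prod_a\psi_a(\sigma(\partial a))>0$. *)

theory Defs
  imports "HOL-Probability.Probability"
begin

text \<open>Conventions: \<Omega> = {1..q}; a k-tuple \<sigma> \<in> \<Omega>^k is an extensional function on {1..k}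
  with values in {1..q}.\<close>

type_synonym cfun = "(nat \<Rightarrow> nat) \<Rightarrow> real"

definition Om :: "nat \<Rightarrow> nat set" where
  "Om q = {1..q}"

definition tuples :: "nat \<Rightarrow> nat \<Rightarrow> (nat \<Rightarrow> nat) set" where
  "tuples k q = PiE {1..k} (\<lambda>_. Om q)"

definition psi_kq :: "nat \<Rightarrow> nat \<Rightarrow> cfun" where
  "psi_kq k q \<sigma> = 1 - (if (\<forall>i\<in>{1..k}. \<sigma> i = \<sigma> 1) then 1 else 0)"

definition Ekq :: "cfun pmf \<Rightarrow> (nat \<Rightarrow> nat) \<Rightarrow> real" where
  "Ekq P \<sigma> = measure_pmf.expectation P (\<lambda>\<psi>. \<psi> \<sigma>)"

definition xi :: "nat \<Rightarrow> nat \<Rightarrow> cfun pmf \<Rightarrow> real" where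
  "xi k q P = (real q) powi (- int k) * (\<Sum>\<sigma>\<in>tuples k q. Ekq P \<sigma>)"

definition permute_cfun :: "(nat \<Rightarrow> nat) \<Rightarrow> cfun \<Rightarrow> cfun" where
  "permute_cfun \<theta> \<psi> = (\<lambda>\<sigma>. \<psi> (\<sigma> \<circ> \<theta>))"

definition prop_SYM :: "nat \<Rightarrow> nat \<Rightarrow> cfun set \<Rightarrow> cfun pmf \<Rightarrow> bool" where
  "prop_SYM k q Psi P \<longleftrightarrow>
     (\<forall>i\<in>{1..k}. \<forall>\<omega>\<in>Om q. \<forall>\<psi>\<in>Psi.
        (\<Sum>\<tau>\<in>tuples k q. (if \<tau> i = \<omega> then 1 else 0) * \<psi> \<tau>) = real q ^ (k - 1) * xi k q P)
   \<and> (\<forall>\<psi>\<in>Psi. \<forall>\<theta>. \<theta> permutes {1..k} \<longrightarrow> pmf P \<psi> = pmf P (permute_cfun \<theta> \<psi>))"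

definition distrs :: "nat \<Rightarrow> (nat \<Rightarrow> real) set" where
  "distrs q = {\<mu>. (\<forall>i. 0 \<le> \<mu> i) \<and> (\<forall>i. i \<notin> Om q \<longrightarrow> \<mu> i = 0) \<and> (\<Sum>i\<in>Om q. \<mu> i) = 1}"

definition unif :: "nat \<Rightarrow> nat \<Rightarrow> real" where
  "unif q = (\<lambda>i. if i \<in> Om q then 1 / real q else 0)"

definition phi_bal :: "nat \<Rightarrow> nat \<Rightarrow> cfun pmf \<Rightarrow> (nat \<Rightarrow> real) \<Rightarrow> real" where
  "phi_bal k q P \<mu> = (\<Sum>\<tau>\<in>tuples k q. Ekq P \<tau> * (\<Prod>i\<in>{1..k}. \<mu> (\<tau> i)))"

definition prop_BAL :: "nat \<Rightarrow> nat \<Rightarrow> cfun pmf \<Rightarrow> bool" where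
  "prop_BAL k q P \<longleftrightarrow>
     (\<forall>\<mu>\<in>distrs q. \<forall>\<nu>\<in>distrs q. \<forall>t::real. 0 \<le> t \<and> t \<le> 1 \<longrightarrow>
        t * phi_bal k q P \<mu> + (1 - t) * phi_bal k q P \<nu>
          \<le> phi_bal k q P (\<lambda>i. t * \<mu> i + (1 - t) * \<nu> i))
   \<and> (\<forall>\<mu>\<in>distrs q. phi_bal k q P \<mu> \<le> phi_bal k q P (unif q))"

definition couplings :: "nat \<Rightarrow> (nat \<times> nat \<Rightarrow> real) set" where
  "couplings q = {\<rho>. (\<forall>x. 0 \<le> \<rho> x) \<and> (\<forall>x. x \<notin> Om q \<times> Om q \<longrightarrow> \<rho> x = 0)
      \<and> (\<Sum>x\<in>Om q \<times> Om q. \<rho> x) = 1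
      \<and> (\<forall>i\<in>Om q. (\<Sum>j\<in>Om q. \<rho> (i, j)) = 1 / real q)
      \<and> (\<forall>j\<in>Om q. (\<Sum>i\<in>Om q. \<rho> (i, j)) = 1 / real q)}"

definition unif2 :: "nat \<Rightarrow> nat \<times> nat \<Rightarrow> real" where
  "unif2 q = (\<lambda>x. if x \<in> Om q \<times> Om q then 1 / (real q)^2 else 0)"

definition phi_min :: "nat \<Rightarrow> nat \<Rightarrow> cfun pmf \<Rightarrow> (nat \<times> nat \<Rightarrow> real) \<Rightarrow> real" where
  "phi_min k q P \<rho> = (\<Sum>\<sigma>\<in>tuples k q. \<Sum>\<tau>\<in>tuples k q.
      measure_pmf.expectation P (\<lambda>\<psi>. \<psi> \<sigma> * \<psi> \<tau>) * (\<Prod>i\<in>{1..k}. \<rho> (\<sigma> i, \<tau> i)))"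

definition prop_MIN :: "nat \<Rightarrow> nat \<Rightarrow> cfun pmf \<Rightarrow> bool" where
  "prop_MIN k q P \<longleftrightarrow> unif2 q \<in> couplings q
     \<and> (\<forall>\<rho>\<in>couplings q. phi_min k q P (unif2 q) \<le> phi_min k q P \<rho>)
     \<and> (\<forall>\<rho>\<in>couplings q. phi_min k q P \<rho> = phi_min k q P (unif2 q) \<longrightarrow> \<rho> = unif2 q)"

text \<open>Probability measures on the distributions on \<Omega> (Borel sets for the product
  topology on nat \<Rightarrow> real, restricted to the simplex) with mean the uniform distribution.\<close>
definition centred_measures :: "nat \<Rightarrow> (nat \<Rightarrow> real) measure set" where
  "centred_measures q = {\<pi>. prob_space \<pi> \<and> sets \<pi> = sets (restrict_space borel (distrs q))
      \<and> (\<forall>\<omega>\<in>Om q. (\<integral>\<rho>. \<rho> \<omega> \<partial>\<pi>) = 1 / real q)}"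

definition prop_POS :: "nat \<Rightarrow> nat \<Rightarrow> cfun pmf \<Rightarrow> bool" where
  "prop_POS k q P \<longleftrightarrow>
    (\<forall>\<pi>\<in>centred_measures q. \<forall>\<pi>'\<in>centred_measures q. \<forall>l::nat. l \<ge> 2 \<longrightarrow>
      (let M = (PiM {1..k} (\<lambda>_. \<pi>) \<Otimes>\<^sub>M PiM {1..k} (\<lambda>_. \<pi>')) \<Otimes>\<^sub>M measure_pmf P;
           f = (\<lambda>((r, r'), \<psi>).
              (1 - (\<Sum>\<tau>\<in>tuples k q. \<psi> \<tau> * (\<Prod>i\<in>{1..k}. r i (\<tau> i)))) ^ l
              + real (k - 1) * (1 - (\<Sum>\<tau>\<in>tuples k q. \<psi> \<tau> * (\<Prod>i\<in>{1..k}. r' i (\<tau> i)))) ^ l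
              - real k * (1 - (\<Sum>\<tau>\<in>tuples k q. \<psi> \<tau> * (r 1 (\<tau> 1) * (\<Prod>i\<in>{2..k}. r' i (\<tau> i))))) ^ l)
       in integrable M f \<and> 0 \<le> (\<integral>x. f x \<partial>M)))"

text \<open>CSPs: variables V, constraints F (both labelled by naturals), constraint a acts on
  the k-tuple (dd a 1, ..., dd a k) with constraint function c a.\<close>

definition fg_vertices :: "nat set \<Rightarrow> nat set \<Rightarrow> (nat + nat) set" where
  "fg_vertices V F = Inl ` V \<union> Inr ` F"

definition fg_edges :: "nat \<Rightarrow> nat set \<Rightarrow> (nat \<Rightarrow> nat \<Rightarrow> nat) \<Rightarrow> (nat + nat) set set" where
  "fg_edges k F dd = {{Inl x, Inr a} | x a. a \<in> F \<and> x \<in> dd a ` {1..k}}"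

definition graph_connected :: "'v set \<Rightarrow> 'v set set \<Rightarrow> bool" where
  "graph_connected W E \<longleftrightarrow> (\<forall>u\<in>W. \<forall>w\<in>W. (u, w) \<in> {(x, y). {x, y} \<in> E}\<^sup>*)"

text \<open>A cycle (as a subgraph, i.e. its edge set): given by a list of n \<ge> 3 distinct
  vertices, consecutive ones (cyclically) adjacent.\<close>
definition is_cycle :: "'v set set \<Rightarrow> 'v set set \<Rightarrow> bool" where
  "is_cycle E C \<longleftrightarrow> (\<exists>vs. distinct vs \<and> length vs \<ge> 3
      \<and> (\<forall>i<length vs. {vs ! i, vs ! ((i + 1) mod length vs)} \<in> E)
      \<and> C = {{vs ! i, vs ! ((i + 1) mod length vs)} | i. i < length vs})"

definition unicyclic :: "'v set \<Rightarrow> 'v set set \<Rightarrow> bool" where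
  "unicyclic W E \<longleftrightarrow> graph_connected W E \<and> (\<exists>!C. is_cycle E C)"

definition prop_UNI :: "nat \<Rightarrow> nat \<Rightarrow> cfun set \<Rightarrow> bool" where
  "prop_UNI k q Psi \<longleftrightarrow>
    (\<forall>(V::nat set) (F::nat set) (dd::nat \<Rightarrow> nat \<Rightarrow> nat) (c::nat \<Rightarrow> cfun).
       finite V \<and> finite F
       \<and> (\<forall>a\<in>F. c a \<in> Psi)
       \<and> (\<forall>a\<in>F. \<forall>i\<in>{1..k}. dd a i \<in> V)
       \<and> (\<forall>a\<in>F. inj_on (dd a) {1..k})
       \<and> unicyclic (fg_vertices V F) (fg_edges k F dd)
       \<longrightarrow> (\<exists>\<sigma>. \<sigma> \<in> V \<rightarrow> Om q \<and>
              (\<Prod>a\<in>F. c a (\<lambda>i\<in>{1..k}. \<sigma> (dd a i))) > 0))"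

end

theory Submission
  imports Defs
begin


definition isconst :: "nat \<Rightarrow> (nat \<Rightarrow> nat) \<Rightarrow> bool" where
  "isconst k \<tau> \<longleftrightarrow> (\<forall>i\<in>{1..k}. \<tau> i = \<tau> 1)"

lemma tuples_const:
  assumes "k \<ge> 1"
  shows "{\<tau>\<in>tuples k q. isconst k \<tau>} = (\<lambda>x. \<lambda>j\<in>{1..k}. x) ` Om q"
  unfolding isconst_def
proof (intro equalityI subsetI)
  fix \<tau> assume "\<tau> \<in> {\<tau>\<in>tuples k q. \<forall>i\<in>{1..k}. \<tau> i = \<tau> 1}"
  then have t: "\<tau> \<in> PiE {1..k} (\<lambda>_. Om q)" and c: "\<forall>i\<in>{1..k}. \<tau> i = \<tau> 1"
    unfolding tuples_def by blast+
  have "\<tau> = (\<lambda>j\<in>{1..k}. \<tau> 1)"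
  proof
    fix j show "\<tau> j = (\<lambda>j\<in>{1..k}. \<tau> 1) j"
    proof (cases "j \<in> {1..k}")
      case True
      from c True have "\<tau> j = \<tau> 1" by blast
      then show ?thesis using True by simp
    next
      case False then show ?thesis using t by (auto simp: PiE_def extensional_def)
    qed
  qed
  moreover have "\<tau> 1 \<in> Om q" using t assms by (simp add: PiE_def Pi_def)
  ultimately show "\<tau> \<in> (\<lambda>x. \<lambda>j\<in>{1..k}. x) ` Om q" by blast
next
  fix \<tau> assume "\<tau> \<in> (\<lambda>x. \<lambda>j\<in>{1..k}. x) ` Om q"
  then show "\<tau> \<in> {\<tau>\<in>tuples k q. \<forall>i\<in>{1..k}. \<tau> i = \<tau> 1}"
    using assms by (auto simp: tuples_def)
qed

lemma aux_if1: "(1::real) - (if b then 1 else 0) = (if b then 0 else 1)" by simp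
lemma aux_if2: "(if b then 0 else 1) * (x::real) = x - (if b then x else 0)" by simp

lemma psi_if: "psi_kq k q \<tau> = (if isconst k \<tau> then 0 else 1)"
  unfolding psi_kq_def isconst_def by (rule aux_if1)

lemma sum_psi:
  assumes "k \<ge> 1"
  shows "(\<Sum>\<tau>\<in>tuples k q. psi_kq k q \<tau> * (\<Prod>j\<in>{1..k}. w j (\<tau> j)))
       = (\<Prod>j\<in>{1..k}. \<Sum>x\<in>Om q. w j x) - (\<Sum>x\<in>Om q. \<Prod>j\<in>{1..k}. (w j x :: real))"
proof -
  define P where "P = (\<lambda>\<tau>. \<Prod>j\<in>{1..k}. w j (\<tau> j))"
  define C where "C = {\<tau>\<in>tuples k q. isconst k \<tau>}"
  have fin: "finite (tuples k q)" unfolding tuples_def Om_def by (intro finite_PiE) auto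
  have e1: "(\<Sum>\<tau>\<in>tuples k q. psi_kq k q \<tau> * P \<tau>)
      = (\<Sum>\<tau>\<in>tuples k q. P \<tau>) - (\<Sum>\<tau>\<in>tuples k q. if isconst k \<tau> then P \<tau> else 0)"
    unfolding sum_subtractf[symmetric]
    by (rule sum.cong[OF refl]) (simp only: psi_if aux_if2)
  have e2: "(\<Sum>\<tau>\<in>tuples k q. P \<tau>) = (\<Prod>j\<in>{1..k}. \<Sum>x\<in>Om q. w j x)"
    unfolding tuples_def P_def by (rule prod_sum_PiE[symmetric]) (auto simp: Om_def)
  have e3: "(\<Sum>\<tau>\<in>tuples k q. if isconst k \<tau> then P \<tau> else 0) = sum P C"
    unfolding C_def using fin by (rule sum.inter_filter[symmetric])
  have inj: "inj_on (\<lambda>x. \<lambda>j\<in>{1..k}. x) (Om q)"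
  proof
    fix x y assume "(\<lambda>j\<in>{1..k}. x) = (\<lambda>j\<in>{1..k}. y)"
    then have "(\<lambda>j\<in>{1..k}. x) 1 = (\<lambda>j\<in>{1..k}. y) 1" by simp
    then show "x = y" using assms by simp
  qed
  have e4: "sum P C = (\<Sum>x\<in>Om q. P (\<lambda>j\<in>{1..k}. x))"
    unfolding C_def tuples_const[OF assms] using inj by (rule sum.reindex[unfolded comp_def])
  have e5: "(\<Sum>x\<in>Om q. P (\<lambda>j\<in>{1..k}. x)) = (\<Sum>x\<in>Om q. \<Prod>j\<in>{1..k}. w j x)"
    unfolding P_def by (intro sum.cong refl prod.cong) auto
  have e0: "(\<Sum>\<tau>\<in>tuples k q. psi_kq k q \<tau> * (\<Prod>j\<in>{1..k}. w j (\<tau> j)))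
      = (\<Sum>\<tau>\<in>tuples k q. psi_kq k q \<tau> * P \<tau>)" unfolding P_def by (rule refl)
  show ?thesis using e0 e1 e2 e3 e4 e5 by linarith
qed

lemma card_Om[simp]: "card (Om q) = q" by (simp add: Om_def)
lemma finite_Om[simp]: "finite (Om q)" by (simp add: Om_def)
lemma finite_tuples[simp]: "finite (tuples k q)"
  unfolding tuples_def Om_def by (intro finite_PiE) auto

lemma Ekq_return: "Ekq (return_pmf \<psi>) \<sigma> = \<psi> \<sigma>"
  by (simp add: Ekq_def)

lemma sum_psi_1:
  assumes "k \<ge> 1"
  shows "(\<Sum>\<tau>\<in>tuples k q. psi_kq k q \<tau>) = real q ^ k - real q"
  using sum_psi[OF assms, of q "\<lambda>_ _. 1"] by simp

lemma xi_psi: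
  assumes "k \<ge> 1" "q \<ge> 1"
  shows "xi k q (return_pmf (psi_kq k q)) = 1 - real q / real q ^ k"
proof -
  have "xi k q (return_pmf (psi_kq k q)) = inverse (real q ^ k) * (real q ^ k - real q)"
    unfolding xi_def Ekq_return sum_psi_1[OF assms(1)] by (simp add: power_int_minus)
  also have "\<dots> = 1 - real q / real q ^ k" using assms by (simp add: field_simps)
  finally show ?thesis .
qed

lemma isconst_iff:
  assumes "k \<ge> 1"
  shows "isconst k \<sigma> \<longleftrightarrow> (\<forall>i\<in>{1..k}. \<forall>j\<in>{1..k}. \<sigma> i = \<sigma> j)"
  unfolding isconst_def using assms by (metis atLeastAtMost_iff order_refl)

lemma isconst_perm:
  assumes "k \<ge> 1" "\<theta> permutes {1..k}"
  shows "isconst k (\<sigma> \<circ> \<theta>) \<longleftrightarrow> isconst k \<sigma>"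
proof -
  have im: "\<theta> ` {1..k} = {1..k}" using assms(2) by (rule permutes_image)
  have "(\<forall>i\<in>{1..k}. \<forall>j\<in>{1..k}. \<sigma> (\<theta> i) = \<sigma> (\<theta> j)) \<longleftrightarrow> (\<forall>i\<in>\<theta> ` {1..k}. \<forall>j\<in>\<theta> ` {1..k}. \<sigma> i = \<sigma> j)"
    by blast
  then show ?thesis unfolding isconst_iff[OF assms(1)] im comp_def by blast
qed

lemma psi_perm:
  assumes "k \<ge> 1" "\<theta> permutes {1..k}"
  shows "permute_cfun \<theta> (psi_kq k q) = psi_kq k q"
  unfolding permute_cfun_def psi_if[abs_def] using isconst_perm[OF assms] by (intro ext) simp

lemma SYM:
  assumes "k \<ge> 2" "q \<ge> 1"
  shows "prop_SYM k q {psi_kq k q} (return_pmf (psi_kq k q))"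
  unfolding prop_SYM_def
proof (intro conjI ballI allI impI)
  fix \<theta> \<psi> assume "\<psi> \<in> {psi_kq k q}" "\<theta> permutes {1..k}"
  then show "pmf (return_pmf (psi_kq k q)) \<psi> = pmf (return_pmf (psi_kq k q)) (permute_cfun \<theta> \<psi>)"
    using psi_perm[of k \<theta> q] assms by simp
next
  fix i \<omega> \<psi> assume i: "i \<in> {1..k}" and w: "\<omega> \<in> Om q" and p: "\<psi> \<in> {psi_kq k q}"
  have k1: "k \<ge> 1" using assms by simp
  define w where "w = (\<lambda>j x. if j = i then (if x = \<omega> then 1 else 0) else (1::real))"
  have pw: "\<And>\<tau>. (\<Prod>j\<in>{1..k}. w j (\<tau> j)) = (if \<tau> i = \<omega> then 1 else 0)"
  proof -
    fix \<tau>
    have "(\<Prod>j\<in>{1..k}. w j (\<tau> j)) = (\<Prod>j\<in>{1..k}. if j = i then (if \<tau> i = \<omega> then 1 else 0) else 1)"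
      unfolding w_def by (intro prod.cong) auto
    also have "\<dots> = (if \<tau> i = \<omega> then 1 else 0)" using i by (simp add: prod.delta)
    finally show "(\<Prod>j\<in>{1..k}. w j (\<tau> j)) = (if \<tau> i = \<omega> then 1 else 0)" .
  qed
  have s1: "(\<Prod>j\<in>{1..k}. \<Sum>x\<in>Om q. w j x) = real q ^ (k - 1)"
  proof -
    have "(\<Prod>j\<in>{1..k}. \<Sum>x\<in>Om q. w j x) = (\<Prod>j\<in>{1..k}. if j = i then 1 else real q)"
      unfolding w_def using w by (intro prod.cong) auto
    also have "\<dots> = (\<Prod>j\<in>{1..k}-{i}. real q)"
      using i by (subst prod.remove[of _ i]) auto
    also have "\<dots> = real q ^ (k - 1)" using i by simp
    finally show ?thesis .
  qed
  have s2: "(\<Sum>x\<in>Om q. \<Prod>j\<in>{1..k}. w j x) = 1"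
  proof -
    have "(\<Sum>x\<in>Om q. \<Prod>j\<in>{1..k}. w j x) = (\<Sum>x\<in>Om q. if x = \<omega> then 1 else 0)"
      using pw[of "\<lambda>_. x" for x] by (intro sum.cong) (auto simp: pw[of "\<lambda>_. _"])
    also have "\<dots> = 1" using w by simp
    finally show ?thesis .
  qed
  have "(\<Sum>\<tau>\<in>tuples k q. (if \<tau> i = \<omega> then 1 else 0) * \<psi> \<tau>) = (\<Sum>\<tau>\<in>tuples k q. psi_kq k q \<tau> * (\<Prod>j\<in>{1..k}. w j (\<tau> j)))"
    using p unfolding pw by (intro sum.cong refl) (simp add: mult.commute)
  also have "\<dots> = real q ^ (k - 1) - 1" using sum_psi[OF k1, of q w] s1 s2 by simp
  also have "\<dots> = real q ^ (k - 1) * xi k q (return_pmf (psi_kq k q))"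
  proof -
    have "real q ^ k = real q * real q ^ (k - 1)" using k1 by (metis Suc_diff_1 less_le_trans power_Suc zero_less_one)
    then show ?thesis unfolding xi_psi[OF k1 assms(2)] using assms by (simp add: field_simps)
  qed
  finally show "(\<Sum>\<tau>\<in>tuples k q. (if \<tau> i = \<omega> then 1 else 0) * \<psi> \<tau>) = real q ^ (k - 1) * xi k q (return_pmf (psi_kq k q))" .
qed




lemma bern_strict:
  fixes h :: real
  assumes "h \<ge> -1" "h \<noteq> 0" "n \<ge> 2"
  shows "1 + real n * h < (1 + h) ^ n"
  using assms(3)
proof (induction n rule: nat_induct_at_least)
  case base
  have "0 < h*h" using assms(2) by (metis not_real_square_gt_zero)
  then show ?case by (simp add: power2_eq_square algebra_simps)
next
  case (Suc n)
  have "(1 + real n * h) * (1 + h) \<le> (1 + h) ^ n * (1 + h)"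
    using Suc.IH assms(1) by (intro mult_right_mono) auto
  moreover have "1 + real (Suc n) * h < (1 + real n * h) * (1 + h)"
  proof -
    have "0 < h*h" using assms(2) by (metis not_real_square_gt_zero)
    then have "0 < real n * (h*h)" using Suc.hyps by simp
    then show ?thesis by (simp add: algebra_simps)
  qed
  ultimately show ?case by (simp add: mult.commute)
qed

lemma tangent:
  fixes x a :: real
  assumes "x \<ge> 0" "a \<ge> 0" "k \<ge> 1"
  shows "a ^ k + real k * a ^ (k - 1) * (x - a) \<le> x ^ k"
proof (cases "a = 0")
  case True
  then show ?thesis
  proof (cases "k = 1")
    case False then have "k - 1 \<noteq> 0" using assms by simp
    then have z: "(0::real) ^ (k - 1) = 0" "(0::real) ^ k = 0" using assms by simp_all
    show ?thesis unfolding True z using assms by simp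
  qed simp
next
  case False
  then have a: "a > 0" using assms by simp
  define h where "h = x / a - 1"
  have h: "h \<ge> -1" using assms a by (simp add: h_def)
  have xa: "x = a * (1 + h)" using a by (simp add: h_def)
  have "1 + real k * h \<le> (1 + h) ^ k" using Bernoulli_inequality[OF h] by simp
  then have "a ^ k * (1 + real k * h) \<le> a ^ k * (1 + h) ^ k"
    using a by (intro mult_left_mono) auto
  moreover have "a ^ k * (1 + real k * h) = a ^ k + real k * a ^ (k - 1) * (x - a)"
  proof -
    have "a ^ k = a * a ^ (k - 1)" using assms(3) by (metis Suc_diff_1 less_le_trans power_Suc zero_less_one)
    then show ?thesis unfolding xa by (simp add: algebra_simps)
  qed
  ultimately show ?thesis unfolding xa by (simp add: power_mult_distrib)
qed

lemma tangent_strict: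
  fixes x a :: real
  assumes "x \<ge> 0" "a > 0" "k \<ge> 2" "x \<noteq> a"
  shows "a ^ k + real k * a ^ (k - 1) * (x - a) < x ^ k"
proof -
  define h where "h = x / a - 1"
  have h: "h \<ge> -1" using assms by (simp add: h_def)
  have xa: "x = a * (1 + h)" using assms by (simp add: h_def)
  have h0: "h \<noteq> 0" using assms by (simp add: h_def)
  have "1 + real k * h < (1 + h) ^ k" using bern_strict[OF h h0 assms(3)] .
  then have "a ^ k * (1 + real k * h) < a ^ k * (1 + h) ^ k"
    using assms by (intro mult_strict_left_mono) auto
  moreover have "a ^ k * (1 + real k * h) = a ^ k + real k * a ^ (k - 1) * (x - a)"
  proof -
    have "a ^ k = a * a ^ (k - 1)" using assms(3) by (metis Suc_diff_1 le_trans one_le_numeral power_Suc less_le_trans zero_less_one)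
    then show ?thesis unfolding xa by (simp add: algebra_simps)
  qed
  ultimately show ?thesis unfolding xa by (simp add: power_mult_distrib)
qed

lemma sum_pow_ge:
  fixes f :: "'a \<Rightarrow> real"
  assumes fin: "finite S" and N: "card S = N" "N > 0" and nn: "\<forall>x\<in>S. f x \<ge> 0"
    and s1: "(\<Sum>x\<in>S. f x) = 1" and k: "k \<ge> 1"
  shows "real N * (1 / real N) ^ k \<le> (\<Sum>x\<in>S. f x ^ k)"
    and "k \<ge> 2 \<Longrightarrow> (\<Sum>x\<in>S. f x ^ k) = real N * (1 / real N) ^ k \<Longrightarrow> \<forall>x\<in>S. f x = 1 / real N"
proof -
  define a where "a = 1 / real N"
  have a: "a > 0" using N by (simp add: a_def)
  have sumT: "(\<Sum>x\<in>S. a ^ k + real k * a ^ (k - 1) * (f x - a)) = real N * a ^ k"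
  proof -
    have "(\<Sum>x\<in>S. a ^ k + real k * a ^ (k - 1) * (f x - a))
        = real N * a ^ k + real k * a ^ (k - 1) * ((\<Sum>x\<in>S. f x) - real N * a)"
      using N by (simp add: sum.distrib sum_distrib_left[symmetric] sum_subtractf)
    also have "(\<Sum>x\<in>S. f x) - real N * a = 0" using s1 N by (simp add: a_def)
    finally show ?thesis by simp
  qed
  have le: "\<forall>x\<in>S. a ^ k + real k * a ^ (k - 1) * (f x - a) \<le> f x ^ k"
  proof
    fix x assume "x \<in> S"
    then show "a ^ k + real k * a ^ (k - 1) * (f x - a) \<le> f x ^ k"
      using nn a k by (intro tangent) auto
  qed
  show "real N * (1 / real N) ^ k \<le> (\<Sum>x\<in>S. f x ^ k)"
  proof -
    have "(\<Sum>x\<in>S. a ^ k + real k * a ^ (k - 1) * (f x - a)) \<le> (\<Sum>x\<in>S. f x ^ k)"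
      using le by (intro sum_mono) blast
    then show ?thesis using sumT by (simp add: a_def)
  qed
  assume k2: "k \<ge> 2" and eq: "(\<Sum>x\<in>S. f x ^ k) = real N * (1 / real N) ^ k"
  show "\<forall>x\<in>S. f x = 1 / real N"
  proof (rule ccontr)
    assume "\<not> (\<forall>x\<in>S. f x = 1 / real N)"
    then obtain x0 where x0: "x0 \<in> S" "f x0 \<noteq> a" by (auto simp: a_def)
    have "(\<Sum>x\<in>S. a ^ k + real k * a ^ (k - 1) * (f x - a)) < (\<Sum>x\<in>S. f x ^ k)"
    proof (rule sum_strict_mono_ex1[OF fin le])
      show "\<exists>x\<in>S. a ^ k + real k * a ^ (k - 1) * (f x - a) < f x ^ k"
        using x0 nn a k2 by (intro bexI[of _ x0] tangent_strict) auto
    qed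
    then show False using sumT eq by (simp add: a_def)
  qed
qed




lemma phi_bal_eq:
  assumes "k \<ge> 1"
  shows "phi_bal k q (return_pmf (psi_kq k q)) \<mu> = (\<Sum>x\<in>Om q. \<mu> x) ^ k - (\<Sum>x\<in>Om q. \<mu> x ^ k)"
  unfolding phi_bal_def Ekq_return sum_psi[OF assms, of q "\<lambda>_. \<mu>"] by simp

lemma distrs_sum: "\<mu> \<in> distrs q \<Longrightarrow> (\<Sum>x\<in>Om q. \<mu> x) = 1" by (simp add: distrs_def)

lemma BAL:
  assumes "k \<ge> 2" "q \<ge> 1"
  shows "prop_BAL k q (return_pmf (psi_kq k q))"
  unfolding prop_BAL_def
proof (intro conjI ballI allI impI)
  have k1: "k \<ge> 1" using assms by simp
  fix \<mu> \<nu> and t :: real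
  assume m: "\<mu> \<in> distrs q" and n: "\<nu> \<in> distrs q" and t: "0 \<le> t \<and> t \<le> 1"
  define m where "m = (\<lambda>i. t * \<mu> i + (1 - t) * \<nu> i)"
  have sm: "(\<Sum>x\<in>Om q. m x) = 1"
    using distrs_sum[OF m] distrs_sum[OF n] by (simp add: m_def sum.distrib sum_distrib_left[symmetric])
  have mu0: "\<And>x. \<mu> x \<ge> 0" "\<And>x. \<nu> x \<ge> 0" using m n by (auto simp: distrs_def)
  have m0: "\<And>x. m x \<ge> 0" using mu0 t by (simp add: m_def)
  have pt: "m x ^ k \<le> t * \<mu> x ^ k + (1 - t) * \<nu> x ^ k" for x
  proof -
    have a: "m x ^ k + real k * m x ^ (k - 1) * (\<mu> x - m x) \<le> \<mu> x ^ k"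
      using mu0 m0 k1 by (intro tangent) auto
    have b: "m x ^ k + real k * m x ^ (k - 1) * (\<nu> x - m x) \<le> \<nu> x ^ k"
      using mu0 m0 k1 by (intro tangent) auto
    have "t * (m x ^ k + real k * m x ^ (k - 1) * (\<mu> x - m x)) + (1 - t) * (m x ^ k + real k * m x ^ (k - 1) * (\<nu> x - m x))
        \<le> t * \<mu> x ^ k + (1 - t) * \<nu> x ^ k"
      using a b t by (intro add_mono mult_left_mono) auto
    moreover have "t * (m x ^ k + real k * m x ^ (k - 1) * (\<mu> x - m x)) + (1 - t) * (m x ^ k + real k * m x ^ (k - 1) * (\<nu> x - m x))
        = m x ^ k + real k * m x ^ (k - 1) * (t * \<mu> x + (1 - t) * \<nu> x - m x)"
      by (simp add: algebra_simps)
    moreover have "t * \<mu> x + (1 - t) * \<nu> x - m x = 0" by (simp add: m_def)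
    ultimately show ?thesis by simp
  qed
  have "(\<Sum>x\<in>Om q. m x ^ k) \<le> t * (\<Sum>x\<in>Om q. \<mu> x ^ k) + (1 - t) * (\<Sum>x\<in>Om q. \<nu> x ^ k)"
    using sum_mono[of "Om q", OF pt] by (simp add: sum.distrib sum_distrib_left)
  then show "t * phi_bal k q (return_pmf (psi_kq k q)) \<mu> + (1 - t) * phi_bal k q (return_pmf (psi_kq k q)) \<nu>
          \<le> phi_bal k q (return_pmf (psi_kq k q)) (\<lambda>i. t * \<mu> i + (1 - t) * \<nu> i)"
    unfolding phi_bal_eq[OF k1] m_def[symmetric] distrs_sum[OF m] distrs_sum[OF n] sm
    by (simp add: algebra_simps)
next
  have k1: "k \<ge> 1" using assms by simp
  fix \<mu> assume m: "\<mu> \<in> distrs q"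
  have su: "(\<Sum>x\<in>Om q. unif q x) = 1" using assms by (simp add: unif_def)
  have su2: "(\<Sum>x\<in>Om q. unif q x ^ k) = real q * (1 / real q) ^ k" by (simp add: unif_def)
  have "real q * (1 / real q) ^ k \<le> (\<Sum>x\<in>Om q. \<mu> x ^ k)"
    using m assms by (intro sum_pow_ge(1)[of "Om q" q]) (auto simp: distrs_def)
  then show "phi_bal k q (return_pmf (psi_kq k q)) \<mu> \<le> phi_bal k q (return_pmf (psi_kq k q)) (unif q)"
    unfolding phi_bal_eq[OF k1] distrs_sum[OF m] su su2 by simp
qed




lemma phi_min_eq:
  assumes k1: "k \<ge> 1"
  shows "phi_min k q (return_pmf (psi_kq k q)) \<rho> =
     ((\<Sum>x\<in>Om q. \<Sum>y\<in>Om q. \<rho> (x, y)) ^ k - (\<Sum>x\<in>Om q. (\<Sum>y\<in>Om q. \<rho> (x, y)) ^ k))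
   - ((\<Sum>y\<in>Om q. (\<Sum>x\<in>Om q. \<rho> (x, y)) ^ k) - (\<Sum>y\<in>Om q. \<Sum>x\<in>Om q. \<rho> (x, y) ^ k))"
proof -
  let ?p = "psi_kq k q"
  define R where "R = (\<lambda>x. \<Sum>y\<in>Om q. \<rho> (x, y))"
  have "phi_min k q (return_pmf ?p) \<rho> = (\<Sum>\<sigma>\<in>tuples k q. ?p \<sigma> * (\<Sum>\<tau>\<in>tuples k q. ?p \<tau> * (\<Prod>i\<in>{1..k}. \<rho> (\<sigma> i, \<tau> i))))"
    unfolding phi_min_def by (simp add: sum_distrib_left mult.assoc)
  also have "\<dots> = (\<Sum>\<sigma>\<in>tuples k q. ?p \<sigma> * ((\<Prod>i\<in>{1..k}. R (\<sigma> i)) - (\<Sum>y\<in>Om q. \<Prod>i\<in>{1..k}. \<rho> (\<sigma> i, y))))"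
    unfolding R_def by (intro sum.cong refl arg_cong2[where f="(*)"] sum_psi[OF k1])
  also have "\<dots> = (\<Sum>\<sigma>\<in>tuples k q. ?p \<sigma> * (\<Prod>i\<in>{1..k}. R (\<sigma> i)))
        - (\<Sum>y\<in>Om q. \<Sum>\<sigma>\<in>tuples k q. ?p \<sigma> * (\<Prod>i\<in>{1..k}. \<rho> (\<sigma> i, y)))"
    by (simp add: right_diff_distrib sum_subtractf sum_distrib_left sum.swap[of _ "Om q"])
  also have "(\<Sum>\<sigma>\<in>tuples k q. ?p \<sigma> * (\<Prod>i\<in>{1..k}. R (\<sigma> i))) = (\<Sum>x\<in>Om q. R x) ^ k - (\<Sum>x\<in>Om q. R x ^ k)"
    using sum_psi[OF k1, of q "\<lambda>_. R"] by simp
  also have "(\<Sum>y\<in>Om q. \<Sum>\<sigma>\<in>tuples k q. ?p \<sigma> * (\<Prod>i\<in>{1..k}. \<rho> (\<sigma> i, y)))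
      = (\<Sum>y\<in>Om q. (\<Sum>x\<in>Om q. \<rho> (x, y)) ^ k - (\<Sum>x\<in>Om q. \<rho> (x, y) ^ k))"
    using sum_psi[OF k1, of q "\<lambda>_ x. \<rho> (x, _)"] by (intro sum.cong refl) simp
  finally show ?thesis unfolding R_def by (simp add: sum_subtractf)
qed

lemma phi_min_coupling:
  assumes k1: "k \<ge> 1" and q: "q \<ge> 1" and r: "\<rho> \<in> couplings q"
  shows "phi_min k q (return_pmf (psi_kq k q)) \<rho> =
     1 - 2 * (real q * (1 / real q) ^ k) + (\<Sum>p\<in>Om q \<times> Om q. \<rho> p ^ k)"
proof -
  have rows: "\<And>x. x \<in> Om q \<Longrightarrow> (\<Sum>y\<in>Om q. \<rho> (x, y)) = 1 / real q"
   and cols: "\<And>y. y \<in> Om q \<Longrightarrow> (\<Sum>x\<in>Om q. \<rho> (x, y)) = 1 / real q"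
    using r by (auto simp: couplings_def)
  have s1: "(\<Sum>x\<in>Om q. \<Sum>y\<in>Om q. \<rho> (x, y)) = 1" using rows q by simp
  have s2: "(\<Sum>x\<in>Om q. (\<Sum>y\<in>Om q. \<rho> (x, y)) ^ k) = real q * (1 / real q) ^ k" using rows by simp
  have s3: "(\<Sum>y\<in>Om q. (\<Sum>x\<in>Om q. \<rho> (x, y)) ^ k) = real q * (1 / real q) ^ k" using cols by simp
  have s4: "(\<Sum>y\<in>Om q. \<Sum>x\<in>Om q. \<rho> (x, y) ^ k) = (\<Sum>p\<in>Om q \<times> Om q. \<rho> p ^ k)"
    by (subst sum.swap) (simp add: sum.cartesian_product split_def)
  show ?thesis unfolding phi_min_eq[OF k1] s1 s2 s3 s4 by simp
qed

lemma unif2_coupling: "q \<ge> 1 \<Longrightarrow> unif2 q \<in> couplings q"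
  unfolding couplings_def unif2_def by (auto simp: power2_eq_square)

lemma MIN:
  assumes "k \<ge> 2" "q \<ge> 1"
  shows "prop_MIN k q (return_pmf (psi_kq k q))"
proof -
  have k1: "k \<ge> 1" using assms by simp
  have cardS: "card (Om q \<times> Om q) = q * q" by (simp add: card_cartesian_product)
  have qq: "q * q > 0" using assms by simp
  have Du: "(\<Sum>p\<in>Om q \<times> Om q. unif2 q p ^ k) = real (q * q) * (1 / real (q * q)) ^ k"
    by (simp add: unif2_def cardS power2_eq_square)
  have ge: "real (q * q) * (1 / real (q * q)) ^ k \<le> (\<Sum>p\<in>Om q \<times> Om q. \<rho> p ^ k)" if r: "\<rho> \<in> couplings q" for \<rho>
    using r k1 by (intro sum_pow_ge(1)[OF _ cardS qq]) (auto simp: couplings_def)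
  have eqc: "\<rho> = unif2 q" if r: "\<rho> \<in> couplings q"
     and e: "(\<Sum>p\<in>Om q \<times> Om q. \<rho> p ^ k) = real (q * q) * (1 / real (q * q)) ^ k" for \<rho>
  proof -
    have all: "\<forall>p\<in>Om q \<times> Om q. \<rho> p = 1 / real (q * q)"
      using r assms e by (intro sum_pow_ge(2)[OF _ cardS qq]) (auto simp: couplings_def)
    show ?thesis
    proof
      fix p show "\<rho> p = unif2 q p"
      proof (cases "p \<in> Om q \<times> Om q")
        case True
        then have "\<rho> p = 1 / real (q * q)" using all by blast
        then show ?thesis using True by (simp add: unif2_def power2_eq_square)
      next
        case False
        have "\<rho> p = 0" using r False unfolding couplings_def by blast
        then show ?thesis using False by (simp add: unif2_def)
      qed
    qed
  qed
  show ?thesis unfolding prop_MIN_def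
  proof (intro conjI ballI impI)
    show "unif2 q \<in> couplings q" using assms unif2_coupling by simp
  next
    fix \<rho> assume r: "\<rho> \<in> couplings q"
    show "phi_min k q (return_pmf (psi_kq k q)) (unif2 q) \<le> phi_min k q (return_pmf (psi_kq k q)) \<rho>"
      unfolding phi_min_coupling[OF k1 assms(2) r] phi_min_coupling[OF k1 assms(2) unif2_coupling[OF assms(2)]] Du
      using ge[OF r] by simp
  next
    fix \<rho> assume r: "\<rho> \<in> couplings q"
      and "phi_min k q (return_pmf (psi_kq k q)) \<rho> = phi_min k q (return_pmf (psi_kq k q)) (unif2 q)"
    then have "(\<Sum>p\<in>Om q \<times> Om q. \<rho> p ^ k) = real (q * q) * (1 / real (q * q)) ^ k"
      unfolding phi_min_coupling[OF k1 assms(2) r] phi_min_coupling[OF k1 assms(2) unif2_coupling[OF assms(2)]] Du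
      by simp
    then show "\<rho> = unif2 q" using eqc r by blast
  qed
qed




definition pairs :: "'v set \<Rightarrow> 'v set set" where
  "pairs W = {{u, v} | u v. u \<in> W \<and> v \<in> W \<and> u \<noteq> v}"

definition ispath :: "'v set set \<Rightarrow> 'v list \<Rightarrow> bool" where
  "ispath E vs \<longleftrightarrow> distinct vs \<and> (\<forall>i. Suc i < length vs \<longrightarrow> {vs ! i, vs ! Suc i} \<in> E)"

lemma finite_pairs: "finite W \<Longrightarrow> finite (pairs W)"
  by (rule finite_subset[of _ "Pow W"]) (auto simp: pairs_def)

lemma is_cycle_mono: "E \<subseteq> E' \<Longrightarrow> is_cycle E C \<Longrightarrow> is_cycle E' C"
  unfolding is_cycle_def by blast

lemma cycle_from_path:
  assumes p: "ispath E vs" and j: "j + 2 < length vs" and e: "{vs ! (length vs - 1), vs ! j} \<in> E"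
  shows "\<exists>C. is_cycle E C"
proof -
  define cs where "cs = drop j vs"
  define L where "L = length cs"
  have L: "L = length vs - j" "L \<ge> 3" using j by (auto simp: L_def cs_def)
  have dist: "distinct cs" using p by (simp add: cs_def ispath_def)
  have nth: "\<And>i. i < L \<Longrightarrow> cs ! i = vs ! (j + i)" using j by (simp add: cs_def L_def)
  have edges: "\<forall>i<L. {cs ! i, cs ! ((i + 1) mod L)} \<in> E"
  proof (intro allI impI)
    fix i assume i: "i < L"
    show "{cs ! i, cs ! ((i + 1) mod L)} \<in> E"
    proof (cases "Suc i < L")
      case True
      then have "(i + 1) mod L = Suc i" by simp
      moreover have "Suc (j + i) < length vs" using True L by simp
      ultimately show ?thesis using p nth[OF i] nth[OF True] unfolding ispath_def by simp
    next
      case False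
      then have i': "i = L - 1" using i by simp
      then have "i + 1 = L" using L by simp
      then have "(i + 1) mod L = 0" by simp
      moreover have "cs ! i = vs ! (length vs - 1)" using nth[OF i] i' L by simp
      moreover have "cs ! 0 = vs ! j" using nth[of 0] L by simp
      ultimately show ?thesis using e by (simp add: insert_commute)
    qed
  qed
  show ?thesis unfolding is_cycle_def
    using dist L edges unfolding L_def by blast
qed

lemma pairs_other:
  assumes "e \<in> pairs W" "v \<in> e"
  shows "\<exists>w. e = {v, w} \<and> w \<noteq> v \<and> w \<in> W"
  using assms unfolding pairs_def by (auto simp: insert_commute)

lemma leaf_exists:
  assumes fin: "finite W" and EW: "E \<subseteq> pairs W" and nc: "\<not> (\<exists>C. is_cycle E C)" and e0: "e0 \<in> E"
  shows "\<exists>v e. e \<in> E \<and> v \<in> e \<and> (\<forall>e'\<in>E. v \<in> e' \<longrightarrow> e' = e)"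
proof -
  define Ps where "Ps = {vs. ispath E vs \<and> set vs \<subseteq> W}"
  obtain a b where ab: "e0 = {a, b}" "a \<in> W" "b \<in> W" "a \<noteq> b" using e0 EW unfolding pairs_def by blast
  have ab_in: "[a, b] \<in> Ps" using ab e0 by (auto simp: Ps_def ispath_def less_Suc_eq)
  have bnd: "\<forall>vs. vs \<in> Ps \<longrightarrow> length vs < Suc (card W)"
  proof (intro allI impI)
    fix vs assume "vs \<in> Ps"
    then have "distinct vs" "set vs \<subseteq> W" by (auto simp: Ps_def ispath_def)
    then have "length vs \<le> card W" using fin by (metis card_mono distinct_card)
    then show "length vs < Suc (card W)" by simp
  qed
  obtain vs where vs: "vs \<in> Ps" and mx: "\<forall>ys. ys \<in> Ps \<longrightarrow> length ys \<le> length vs"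
    using Lattices_Big.ex_has_greatest_nat[of "\<lambda>vs. vs \<in> Ps", OF ab_in bnd] by blast
  define n where "n = length vs"
  have n2: "n \<ge> 2" using mx ab_in by (fastforce simp: n_def)
  have pv: "ispath E vs" "set vs \<subseteq> W" using vs by (auto simp: Ps_def)
  define v where "v = vs ! (n - 1)"
  define u where "u = vs ! (n - 2)"
  have e: "{u, v} \<in> E"
  proof -
    have "Suc (n - 2) < length vs" using n2 by (simp add: n_def)
    then have "{vs ! (n - 2), vs ! Suc (n - 2)} \<in> E" using pv unfolding ispath_def by blast
    moreover have "Suc (n - 2) = n - 1" using n2 by simp
    ultimately show ?thesis by (simp add: u_def v_def)
  qed
  have uv: "u \<noteq> v" using pv n2 unfolding u_def v_def ispath_def n_def
    by (simp add: nth_eq_iff_index_eq)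
  have "\<forall>e'\<in>E. v \<in> e' \<longrightarrow> e' = {u, v}"
  proof (intro ballI impI)
    fix e' assume e': "e' \<in> E" "v \<in> e'"
    obtain w where w: "e' = {v, w}" "w \<noteq> v" "w \<in> W" using pairs_other[of e' W v] e' EW by blast
    show "e' = {u, v}"
    proof (rule ccontr)
      assume ne: "e' \<noteq> {u, v}"
      then have wu: "w \<noteq> u" using w by (auto simp: insert_commute)
      show False
      proof (cases "w \<in> set vs")
        case False
        have "vs @ [w] \<in> Ps"
          unfolding Ps_def ispath_def
        proof (intro CollectI conjI allI impI)
          show "distinct (vs @ [w])" using False pv by (simp add: ispath_def)
          show "set (vs @ [w]) \<subseteq> W" using pv w by simp
          fix i assume i: "Suc i < length (vs @ [w])"
          show "{(vs @ [w]) ! i, (vs @ [w]) ! Suc i} \<in> E"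
          proof (cases "Suc i < length vs")
            case True then show ?thesis using pv by (simp add: nth_append ispath_def)
          next
            case False
            then have "i = n - 1" "Suc i = n" using i n2 by (simp_all add: n_def)
            then show ?thesis using w e' n2 by (simp add: nth_append n_def v_def)
          qed
        qed
        then have "length (vs @ [w]) \<le> length vs" using mx by blast
        then show False by simp
      next
        case True
        then obtain j where j: "j < n" "vs ! j = w" by (auto simp: in_set_conv_nth n_def)
        have "j \<noteq> n - 1" using j w by (auto simp: v_def)
        moreover have "j \<noteq> n - 2" using j wu by (auto simp: u_def)
        ultimately have "j + 2 < length vs" using j by (simp add: n_def)
        moreover have "{vs ! (length vs - 1), vs ! j} \<in> E" using j w e' by (simp add: n_def[symmetric] v_def)
        ultimately show False using cycle_from_path[OF pv(1)] nc by blast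
      qed
    qed
  qed
  then show ?thesis using e by blast
qed

lemma forest_card:
  "finite W \<Longrightarrow> E \<subseteq> pairs W \<Longrightarrow> \<not> (\<exists>C. is_cycle E C) \<Longrightarrow> W \<noteq> {} \<Longrightarrow> card E < card W"
proof (induction "card W" arbitrary: W E rule: less_induct)
  case less
  show ?case
  proof (cases "E = {}")
    case True then show ?thesis using less.prems by (simp add: card_gt_0_iff)
  next
    case False
    then obtain e0 where "e0 \<in> E" by blast
    then obtain v e where ve: "e \<in> E" "v \<in> e" "\<forall>e'\<in>E. v \<in> e' \<longrightarrow> e' = e"
      using leaf_exists[OF less.prems(1-3)] by blast
    obtain w where w: "e = {v, w}" "w \<noteq> v" "w \<in> W" using pairs_other[of e W v] ve less.prems(2) by blast
    have vW: "v \<in> W" using ve less.prems(2) unfolding pairs_def by blast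
    define W' where "W' = W - {v}"
    define E' where "E' = E - {e}"
    have sub: "E' \<subseteq> pairs W'"
    proof
      fix e' assume "e' \<in> E'"
      then have e': "e' \<in> E" "e' \<noteq> e" by (auto simp: E'_def)
      then have "v \<notin> e'" using ve by blast
      moreover obtain p r where "e' = {p, r}" "p \<in> W" "r \<in> W" "p \<noteq> r"
        using e' less.prems(2) unfolding pairs_def by blast
      ultimately show "e' \<in> pairs W'" unfolding pairs_def W'_def by blast
    qed
    have nc': "\<not> (\<exists>C. is_cycle E' C)"
      using less.prems(3) is_cycle_mono[of E' E] by (auto simp: E'_def)
    have ne: "W' \<noteq> {}" using w by (auto simp: W'_def)
    have lt: "card W' < card W" unfolding W'_def by (rule card_Diff1_less[OF less.prems(1) vW])
    have "card E' < card W'"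
      using less.hyps[OF lt _ sub nc' ne] less.prems(1) by (simp add: W'_def)
    moreover have finE: "finite E" using less.prems(1,2) finite_pairs finite_subset by blast
    moreover have "card E' = card E - 1" using ve(1) by (simp add: E'_def card_Diff_singleton)
    moreover have "card W' = card W - 1" using vW by (simp add: W'_def card_Diff_singleton)
    ultimately have "card E - 1 < card W - 1" by simp
    moreover have "card E > 0" using finE ve(1) card_gt_0_iff by blast
    ultimately show ?thesis by simp
  qed
qed

lemma unicyc_card:
  assumes fin: "finite W" and EW: "E \<subseteq> pairs W" and u: "\<forall>C C'. is_cycle E C \<longrightarrow> is_cycle E C' \<longrightarrow> C = C'"
  shows "card E \<le> card W"
proof (cases "\<exists>C. is_cycle E C")
  case False
  show ?thesis
  proof (cases "W = {}")
    case True then have "E = {}" using EW by (auto simp: pairs_def)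
    then show ?thesis by simp
  next
    case False2: False
    show ?thesis using forest_card[OF fin EW False False2] by simp
  qed
next
  case True
  then obtain C where C: "is_cycle E C" by blast
  then obtain vs where vs: "distinct vs" "length vs \<ge> 3"
    "\<forall>i<length vs. {vs ! i, vs ! ((i + 1) mod length vs)} \<in> E"
    "C = {{vs ! i, vs ! ((i + 1) mod length vs)} | i. i < length vs}"
    unfolding is_cycle_def by blast
  define e0 where "e0 = {vs ! 0, vs ! 1}"
  have e0E: "e0 \<in> E" using vs(2,3) by (auto simp: e0_def dest: spec[of _ 0])
  have e0C: "e0 \<in> C" unfolding vs(4) e0_def using vs(2)
    by (intro CollectI exI[of _ 0]) auto
  have nc: "\<not> (\<exists>C'. is_cycle (E - {e0}) C')"
  proof
    assume "\<exists>C'. is_cycle (E - {e0}) C'"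
    then obtain C' where C': "is_cycle (E - {e0}) C'" by blast
    then have "C' \<subseteq> E - {e0}" unfolding is_cycle_def by blast
    moreover have "C' = C" using u C is_cycle_mono[OF _ C', of E] by blast
    ultimately show False using e0C by blast
  qed
  have WE: "W \<noteq> {}" using e0E EW by (auto simp: pairs_def)
  have "card (E - {e0}) < card W" using forest_card[OF fin _ nc WE] EW by blast
  moreover have "finite E" using fin EW finite_pairs finite_subset by blast
  ultimately show ?thesis using e0E by (simp add: card_Diff_singleton)
qed




lemma fg_edges_mono: "F' \<subseteq> F \<Longrightarrow> fg_edges k F' dd \<subseteq> fg_edges k F dd"
  unfolding fg_edges_def by blast

lemma fg_edges_img: "fg_edges k F dd = (\<lambda>p. {Inl (snd p), Inr (fst p)}) ` (SIGMA a:F. dd a ` {1..k})"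
  unfolding fg_edges_def by force

lemma card_sigma_k:
  fixes dd :: "nat \<Rightarrow> nat \<Rightarrow> nat" and k :: nat
  assumes "finite F" "\<forall>a\<in>F. inj_on (dd a) {1..k}"
  shows "card (SIGMA a:F. dd a ` {1..k}) = k * card F"
proof -
  have "card (SIGMA a:F. dd a ` {1..k}) = (\<Sum>a\<in>F. card (dd a ` {1..k}))" using assms by simp
  also have "\<dots> = (\<Sum>a\<in>F. k)" using assms by (intro sum.cong refl) (simp add: card_image)
  finally show ?thesis by simp
qed

lemma card_fg_edges:
  assumes "finite F" "\<forall>a\<in>F. inj_on (dd a) {1..k}"
  shows "card (fg_edges k F dd) = k * card F"
proof -
  have "inj_on (\<lambda>p. {Inl (snd p), Inr (fst p)} :: (nat + nat) set) (SIGMA a:F. dd a ` {1..k})"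
    by (rule inj_onI) (auto simp: doubleton_eq_iff prod_eq_iff)
  then show ?thesis unfolding fg_edges_img using card_sigma_k[OF assms] by (simp add: card_image)
qed

lemma fg_edges_pairs:
  "fg_edges k F dd \<subseteq> pairs (Inl ` (\<Union>a\<in>F. dd a ` {1..k}) \<union> Inr ` F)"
  unfolding fg_edges_def pairs_def by blast

lemma degree_sum:
  fixes dd :: "nat \<Rightarrow> nat \<Rightarrow> nat" and k :: nat
  assumes "finite F"
  shows "(\<Sum>x\<in>(\<Union>a\<in>F. dd a ` {1..k}). card {a\<in>F. x \<in> dd a ` {1..k}}) = card (SIGMA a:F. dd a ` {1..k})"
proof -
  let ?V = "\<Union>a\<in>F. dd a ` {1..k}"
  have fV: "finite ?V" using assms by (intro finite_UN_I) auto
  have im: "(\<lambda>(a, x). (x, a)) ` (SIGMA a:F. dd a ` {1..k}) = (SIGMA x:?V. {a\<in>F. x \<in> dd a ` {1..k}})"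
    by auto
  have inj: "inj_on (\<lambda>(a, x). (x, a)) (SIGMA a:F. dd a ` {1..k})" by (auto simp: inj_on_def)
  have "card (SIGMA a:F. dd a ` {1..k}) = card (SIGMA x:?V. {a\<in>F. x \<in> dd a ` {1..k}})"
    using card_image[OF inj, unfolded im] by simp
  also have "\<dots> = (\<Sum>x\<in>?V. card {a\<in>F. x \<in> dd a ` {1..k}})" using fV assms by simp
  finally show ?thesis by simp
qed

lemma low_degree:
  assumes k2: "k \<ge> 2" and q2: "q \<ge> 2" and kq: "k \<ge> 3 \<or> q \<ge> 3"
    and fin: "finite F" and ne: "F \<noteq> {}" and inj: "\<forall>a\<in>F. inj_on (dd a) {1..k}"
    and u: "\<forall>C C'. is_cycle (fg_edges k F dd) C \<longrightarrow> is_cycle (fg_edges k F dd) C' \<longrightarrow> C = C'"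
  shows "\<exists>x\<in>(\<Union>a\<in>F. dd a ` {1..k}). card {a\<in>F. x \<in> dd a ` {1..k}} < q"
proof (rule ccontr)
  let ?V = "\<Union>a\<in>F. dd a ` {1..k}"
  assume "\<not> ?thesis"
  then have ge: "\<forall>x\<in>?V. q \<le> card {a\<in>F. x \<in> dd a ` {1..k}}" using not_less by blast
  have fV: "finite ?V" using fin by (intro finite_UN_I) auto
  have "card (fg_edges k F dd) \<le> card (Inl ` ?V \<union> Inr ` F)"
    using unicyc_card[OF _ fg_edges_pairs u] fV fin by blast
  also have "\<dots> = card (Inl ` ?V :: (nat + nat) set) + card (Inr ` F :: (nat + nat) set)"
    using fV fin by (intro card_Un_disjoint) auto
  also have "\<dots> = card ?V + card F" by (simp add: card_image)
  finally have e1: "k * card F \<le> card ?V + card F" using card_fg_edges[OF fin inj] by simp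
  have "(\<Sum>x\<in>?V. q) \<le> (\<Sum>x\<in>?V. card {a\<in>F. x \<in> dd a ` {1..k}})"
    using ge by (intro sum_mono) auto
  then have e2: "q * card ?V \<le> k * card F"
    using degree_sum[OF fin] card_sigma_k[OF fin inj] by (simp add: mult.commute)
  have cF: "card F > 0" using fin ne by (simp add: card_gt_0_iff)
  show False
  proof (cases "k \<ge> 3")
    case True
    have "2 * card ?V \<le> q * card ?V" using q2 by simp
    moreover have "3 * card F \<le> k * card F" using True by simp
    ultimately show False using e1 e2 cF by linarith
  next
    case False
    then have k: "k = 2" and q3: "q \<ge> 3" using k2 kq by auto
    have m: "3 * card ?V \<le> q * card ?V" using q3 by simp
    have e1': "2 * card F \<le> card ?V + card F" using e1 k by simp
    have e2': "q * card ?V \<le> 2 * card F" using e2 k by simp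
    show False using m e1' e2' cF by linarith
  qed
qed

definition goodc :: "nat \<Rightarrow> (nat \<Rightarrow> nat \<Rightarrow> nat) \<Rightarrow> (nat \<Rightarrow> nat) \<Rightarrow> nat \<Rightarrow> bool" where
  "goodc k dd \<sigma> a \<longleftrightarrow> (\<exists>i\<in>{1..k}. \<exists>j\<in>{1..k}. \<sigma> (dd a i) \<noteq> \<sigma> (dd a j))"

lemma other_var:
  fixes dd :: "nat \<Rightarrow> nat \<Rightarrow> nat" and k :: nat
  assumes "k \<ge> 2" "inj_on (dd a) {1..k}" "x \<in> dd a ` {1..k}"
  shows "\<exists>y. y \<in> dd a ` {1..k} \<and> y \<noteq> x"
proof -
  obtain i where i: "i \<in> {1..k}" "x = dd a i" using assms by blast
  define j where "j = (if i = 1 then 2 else (1::nat))"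
  have j: "j \<in> {1..k}" "j \<noteq> i" using assms(1) i by (auto simp: j_def)
  then have "dd a j \<noteq> x" using assms(2) i by (metis inj_on_eq_iff)
  then show ?thesis using j by blast
qed

lemma colour:
  assumes k2: "k \<ge> 2" and q2: "q \<ge> 2" and kq: "k \<ge> 3 \<or> q \<ge> 3"
  shows "finite F \<Longrightarrow> (\<forall>a\<in>F. dd a ` {1..k} \<subseteq> V) \<Longrightarrow> (\<forall>a\<in>F. inj_on (dd a) {1..k})
    \<Longrightarrow> (\<forall>C C'. is_cycle (fg_edges k F dd) C \<longrightarrow> is_cycle (fg_edges k F dd) C' \<longrightarrow> C = C')
    \<Longrightarrow> \<exists>\<sigma>. \<sigma> \<in> V \<rightarrow> Om q \<and> (\<forall>a\<in>F. goodc k dd \<sigma> a)"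
proof (induction "card F" arbitrary: F rule: less_induct)
  case less
  note fin = less.prems(1) and sub = less.prems(2) and inj = less.prems(3) and u = less.prems(4)
  show ?case
  proof (cases "F = {}")
    case True
    have "(\<lambda>_. 1) \<in> V \<rightarrow> Om q" using q2 by (auto simp: Om_def)
    then show ?thesis using True by blast
  next
    case False
    obtain x where x: "x \<in> (\<Union>a\<in>F. dd a ` {1..k})" and dq: "card {a\<in>F. x \<in> dd a ` {1..k}} < q"
      using low_degree[OF k2 q2 kq fin False inj u] by blast
    define A where "A = {a\<in>F. x \<in> dd a ` {1..k}}"
    define F' where "F' = F - A"
    have AF: "A \<subseteq> F" by (auto simp: A_def)
    have Ane: "A \<noteq> {}" using x by (auto simp: A_def)
    have finA: "finite A" using fin AF finite_subset by blast
    have c1: "card F' = card F - card A" unfolding F'_def using finA AF by (rule card_Diff_subset)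
    have c2: "card A > 0" using finA Ane card_gt_0_iff by blast
    have c3: "card A \<le> card F" using fin AF card_mono by blast
    have ltF: "card F' < card F" using c1 c2 c3 by linarith
    have F'F: "F' \<subseteq> F" by (auto simp: F'_def)
    have u': "\<forall>C C'. is_cycle (fg_edges k F' dd) C \<longrightarrow> is_cycle (fg_edges k F' dd) C' \<longrightarrow> C = C'"
      using u is_cycle_mono[OF fg_edges_mono[OF F'F]] by blast
    obtain \<sigma> where \<sigma>: "\<sigma> \<in> V \<rightarrow> Om q" "\<forall>a\<in>F'. goodc k dd \<sigma> a"
      using less.hyps[OF ltF _ _ _ u'] fin sub inj F'F finite_subset by (metis subsetD)
    define ya where "ya = (\<lambda>a. SOME y. y \<in> dd a ` {1..k} \<and> y \<noteq> x)"
    have ya: "\<And>a. a \<in> A \<Longrightarrow> ya a \<in> dd a ` {1..k} \<and> ya a \<noteq> x"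
    proof -
      fix a assume a: "a \<in> A"
      have "\<exists>y. y \<in> dd a ` {1..k} \<and> y \<noteq> x"
        using other_var[OF k2] a inj by (auto simp: A_def)
      then show "ya a \<in> dd a ` {1..k} \<and> ya a \<noteq> x" unfolding ya_def by (rule someI_ex)
    qed
    define Cs where "Cs = (\<lambda>a. \<sigma> (ya a)) ` A"
    have "card Cs \<le> card A" unfolding Cs_def using finA by (rule card_image_le)
    then have ltC: "card Cs < card (Om q)" using dq by (simp add: A_def)
    have finCs: "finite Cs" unfolding Cs_def using finA by simp
    have "\<not> Om q \<subseteq> Cs"
    proof
      assume "Om q \<subseteq> Cs"
      then have "card (Om q) \<le> card Cs" by (rule card_mono[OF finCs])
      then show False using ltC by simp
    qed
    then obtain c where c: "c \<in> Om q" "c \<notin> Cs" by blast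
    define \<sigma>' where "\<sigma>' = \<sigma>(x := c)"
    have xV: "x \<in> V" using x sub by blast
    have s1: "\<sigma>' \<in> V \<rightarrow> Om q" using \<sigma>(1) c xV by (auto simp: \<sigma>'_def)
    have s2: "goodc k dd \<sigma>' a" if a: "a \<in> F" for a
    proof (cases "a \<in> A")
      case True
      obtain i where i: "i \<in> {1..k}" "dd a i = x" using True by (auto simp: A_def)
      obtain j where j: "j \<in> {1..k}" "dd a j = ya a" using ya[OF True] by auto
      have "\<sigma>' (dd a i) = c" using i by (simp add: \<sigma>'_def)
      moreover have "\<sigma>' (dd a j) = \<sigma> (ya a)" using j ya[OF True] by (simp add: \<sigma>'_def)
      moreover have "\<sigma> (ya a) \<in> Cs" using True by (simp add: Cs_def)
      ultimately show ?thesis unfolding goodc_def using i j c by metis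
    next
      case False
      then have aF': "a \<in> F'" and xn: "x \<notin> dd a ` {1..k}" using a by (auto simp: F'_def A_def)
      obtain i j where ij: "i \<in> {1..k}" "j \<in> {1..k}" "\<sigma> (dd a i) \<noteq> \<sigma> (dd a j)"
        using \<sigma>(2) aF' unfolding goodc_def by blast
      have "dd a i \<noteq> x" "dd a j \<noteq> x" using xn ij by auto
      then show ?thesis unfolding goodc_def using ij by (intro bexI[of _ i] bexI[of _ j]) (auto simp: \<sigma>'_def)
    qed
    show ?thesis using s1 s2 by blast
  qed
qed




lemma UNI:
  assumes k2: "k \<ge> 2" and q2: "q \<ge> 2" and kq: "k + q > 4"
  shows "prop_UNI k q {psi_kq k q}"
  unfolding prop_UNI_def
proof (intro allI impI)
  fix V F :: "nat set" and dd :: "nat \<Rightarrow> nat \<Rightarrow> nat" and c :: "nat \<Rightarrow> cfun"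
  assume h: "finite V \<and> finite F \<and> (\<forall>a\<in>F. c a \<in> {psi_kq k q}) \<and> (\<forall>a\<in>F. \<forall>i\<in>{1..k}. dd a i \<in> V)
       \<and> (\<forall>a\<in>F. inj_on (dd a) {1..k}) \<and> unicyclic (fg_vertices V F) (fg_edges k F dd)"
  have k1: "k \<ge> 1" using k2 by simp
  have kq': "k \<ge> 3 \<or> q \<ge> 3" using kq k2 q2 by linarith
  have u: "\<forall>C C'. is_cycle (fg_edges k F dd) C \<longrightarrow> is_cycle (fg_edges k F dd) C' \<longrightarrow> C = C'"
    using h unfolding unicyclic_def by blast
  have sub: "\<forall>a\<in>F. dd a ` {1..k} \<subseteq> V" using h by blast
  obtain \<sigma> where \<sigma>: "\<sigma> \<in> V \<rightarrow> Om q" "\<forall>a\<in>F. goodc k dd \<sigma> a"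
    using colour[OF k2 q2 kq', of F dd V] h sub u by blast
  have one: "c a (\<lambda>i\<in>{1..k}. \<sigma> (dd a i)) = 1" if a: "a \<in> F" for a
  proof -
    have ca: "c a = psi_kq k q" using h a by blast
    have nc: "\<not> isconst k (\<lambda>i\<in>{1..k}. \<sigma> (dd a i))"
    proof
      assume "isconst k (\<lambda>i\<in>{1..k}. \<sigma> (dd a i))"
      then have all: "\<forall>i\<in>{1..k}. \<forall>j\<in>{1..k}. (\<lambda>i\<in>{1..k}. \<sigma> (dd a i)) i = (\<lambda>i\<in>{1..k}. \<sigma> (dd a i)) j"
        unfolding isconst_iff[OF k1] .
      obtain i j where ij: "i \<in> {1..k}" "j \<in> {1..k}" "\<sigma> (dd a i) \<noteq> \<sigma> (dd a j)"
        using \<sigma>(2) a unfolding goodc_def by blast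
      have "(\<lambda>i\<in>{1..k}. \<sigma> (dd a i)) i = (\<lambda>i\<in>{1..k}. \<sigma> (dd a i)) j" using all ij(1,2) by blast
      then show False using ij by simp
    qed
    show ?thesis unfolding ca psi_if using nc by simp
  qed
  have "(\<Prod>a\<in>F. c a (\<lambda>i\<in>{1..k}. \<sigma> (dd a i))) = (\<Prod>a\<in>F. 1)"
    using one by (intro prod.cong) auto
  then have "(\<Prod>a\<in>F. c a (\<lambda>i\<in>{1..k}. \<sigma> (dd a i))) > 0" by simp
  then show "\<exists>\<sigma>. \<sigma> \<in> V \<rightarrow> Om q \<and> 0 < (\<Prod>a\<in>F. c a (\<lambda>i\<in>{1..k}. \<sigma> (dd a i)))"
    using \<sigma>(1) by blast
qed




lemma prob_pmf: "prob_space (measure_pmf p)"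
  by (rule measure_pmf.prob_space_axioms)

lemma pair_return_integral:
  fixes f :: "'a \<times> 'b \<Rightarrow> real"
  assumes P: "prob_space M1" and meas: "f \<in> borel_measurable (M1 \<Otimes>\<^sub>M measure_pmf (return_pmf b))"
    and int: "integrable M1 (\<lambda>x. f (x, b))"
  shows "integrable (M1 \<Otimes>\<^sub>M measure_pmf (return_pmf b)) f"
    and "integral\<^sup>L (M1 \<Otimes>\<^sub>M measure_pmf (return_pmf b)) f = (\<integral>x. f (x, b) \<partial>M1)"
proof -
  interpret PS: pair_sigma_finite M1 "measure_pmf (return_pmf b)"
    by (intro pair_sigma_finite.intro prob_space_imp_sigma_finite P prob_pmf)
  have i2: "\<And>x. integrable (measure_pmf (return_pmf b)) (\<lambda>y. f (x, y))"
    by (rule integrable_measure_pmf_finite) simp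
  show I: "integrable (M1 \<Otimes>\<^sub>M measure_pmf (return_pmf b)) f"
  proof (rule PS.Fubini_integrable[OF meas])
    show "integrable M1 (\<lambda>x. \<integral>y. norm (f (x, y)) \<partial>measure_pmf (return_pmf b))"
      using int by (simp add: integrable_norm)
    show "AE x in M1. integrable (measure_pmf (return_pmf b)) (\<lambda>y. f (x, y))"
      using i2 by simp
  qed
  show "integral\<^sup>L (M1 \<Otimes>\<^sub>M measure_pmf (return_pmf b)) f = (\<integral>x. f (x, b) \<partial>M1)"
    using PS.integral_fst'[OF I, symmetric] by simp
qed

lemma pair_prod_integral:
  fixes g :: "'a \<Rightarrow> real" and h :: "'b \<Rightarrow> real"
  assumes PA: "prob_space A" and PB: "prob_space B"
    and g: "g \<in> borel_measurable A" "\<And>x. x \<in> space A \<Longrightarrow> \<bar>g x\<bar> \<le> c"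
    and h: "h \<in> borel_measurable B" "\<And>x. x \<in> space B \<Longrightarrow> \<bar>h x\<bar> \<le> d"
  shows "integrable (A \<Otimes>\<^sub>M B) (\<lambda>z. g (fst z) * h (snd z))"
    and "(\<integral>z. g (fst z) * h (snd z) \<partial>(A \<Otimes>\<^sub>M B)) = integral\<^sup>L A g * integral\<^sup>L B h"
proof -
  interpret PS: pair_sigma_finite A B
    by (intro pair_sigma_finite.intro prob_space_imp_sigma_finite PA PB)
  interpret PP: prob_space "A \<Otimes>\<^sub>M B" by (rule prob_space_pair[OF PA PB])
  interpret A: prob_space A by (rule PA)
  interpret B: prob_space B by (rule PB)
  have intg: "integrable A g" using g by (intro A.integrable_const_bound[of _ c]) auto
  have inth: "integrable B h" using h by (intro B.integrable_const_bound[of _ d]) auto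
  show I: "integrable (A \<Otimes>\<^sub>M B) (\<lambda>z. g (fst z) * h (snd z))"
  proof (rule PP.integrable_const_bound[of _ "c * d"])
    show "AE x in A \<Otimes>\<^sub>M B. norm (g (fst x) * h (snd x)) \<le> c * d"
    proof (rule AE_I2)
      fix z assume "z \<in> space (A \<Otimes>\<^sub>M B)"
      then have "fst z \<in> space A" "snd z \<in> space B" by (auto simp: space_pair_measure)
      then have "\<bar>g (fst z)\<bar> \<le> c" "\<bar>h (snd z)\<bar> \<le> d" using g(2) h(2) by auto
      then show "norm (g (fst z) * h (snd z)) \<le> c * d"
        by (simp add: abs_mult mult_mono')
    qed
    show "(\<lambda>z. g (fst z) * h (snd z)) \<in> borel_measurable (A \<Otimes>\<^sub>M B)"
      using g(1) h(1) by measurable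
  qed
  have "(\<integral>z. g (fst z) * h (snd z) \<partial>(A \<Otimes>\<^sub>M B)) = (\<integral>x. (\<integral>y. g x * h y \<partial>B) \<partial>A)"
    using PS.integral_fst'[OF I] by simp
  also have "\<dots> = (\<integral>x. g x * integral\<^sup>L B h \<partial>A)" by simp
  also have "\<dots> = integral\<^sup>L A g * integral\<^sup>L B h" by simp
  finally show "(\<integral>z. g (fst z) * h (snd z) \<partial>(A \<Otimes>\<^sub>M B)) = integral\<^sup>L A g * integral\<^sup>L B h" .
qed




lemma cm_prob: "\<pi> \<in> centred_measures q \<Longrightarrow> prob_space \<pi>"
  by (simp add: centred_measures_def)

lemma cm_space: "\<pi> \<in> centred_measures q \<Longrightarrow> space \<pi> = distrs q"
proof -
  assume "\<pi> \<in> centred_measures q"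
  then have "sets \<pi> = sets (restrict_space borel (distrs q))" by (simp add: centred_measures_def)
  then have "space \<pi> = space (restrict_space borel (distrs q))" by (rule sets_eq_imp_space_eq)
  then show ?thesis by (simp add: space_restrict_space)
qed

lemma cm_eval: "\<pi> \<in> centred_measures q \<Longrightarrow> (\<lambda>\<rho>. \<rho> \<omega>) \<in> borel_measurable \<pi>"
proof -
  assume "\<pi> \<in> centred_measures q"
  then have s: "sets \<pi> = sets (restrict_space borel (distrs q))" by (simp add: centred_measures_def)
  have "(\<lambda>\<rho>::nat \<Rightarrow> real. \<rho> \<omega>) \<in> borel_measurable (restrict_space borel (distrs q))"
    by (rule measurable_restrict_space1[OF measurable_product_coordinates])
  then show ?thesis by (subst measurable_cong_sets[OF s refl])
qed

lemma distrs_bounds: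
  assumes "\<rho> \<in> distrs q" shows "0 \<le> \<rho> x" "\<rho> x \<le> 1"
proof -
  show "0 \<le> \<rho> x" using assms by (simp add: distrs_def)
  show "\<rho> x \<le> 1"
  proof (cases "x \<in> Om q")
    case True
    have "\<rho> x \<le> (\<Sum>y\<in>Om q. \<rho> y)" using True assms by (intro member_le_sum) (auto simp: distrs_def)
    then show ?thesis using assms by (simp add: distrs_def)
  next
    case False then show ?thesis using assms by (simp add: distrs_def)
  qed
qed

definition mprod :: "(nat \<Rightarrow> nat) \<Rightarrow> nat \<Rightarrow> (nat \<Rightarrow> real) \<Rightarrow> real" where
  "mprod w l \<rho> = (\<Prod>j\<in>{..<l}. \<rho> (w j))"

lemma mprod_bounds: "\<rho> \<in> distrs q \<Longrightarrow> 0 \<le> mprod w l \<rho> \<and> mprod w l \<rho> \<le> 1"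
  unfolding mprod_def using distrs_bounds by (auto intro!: prod_nonneg prod_le_1)

lemma mprod_meas: "\<pi> \<in> centred_measures q \<Longrightarrow> mprod w l \<in> borel_measurable \<pi>"
  unfolding mprod_def[abs_def] by (intro borel_measurable_prod cm_eval)

lemma pow_expand:
  fixes r :: "nat \<Rightarrow> nat \<Rightarrow> real"
  assumes "finite I"
  shows "(\<Sum>x\<in>Om q. \<Prod>i\<in>I. r i x) ^ l = (\<Sum>w\<in>PiE {..<l} (\<lambda>_. Om q). \<Prod>i\<in>I. mprod w l (r i))"
proof -
  have "(\<Sum>x\<in>Om q. \<Prod>i\<in>I. r i x) ^ l = (\<Prod>j\<in>{..<l}. \<Sum>x\<in>Om q. \<Prod>i\<in>I. r i x)" by simp
  also have "\<dots> = (\<Sum>w\<in>PiE {..<l} (\<lambda>_. Om q). \<Prod>j\<in>{..<l}. \<Prod>i\<in>I. r i (w j))"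
    by (rule prod_sum_PiE) auto
  also have "\<dots> = (\<Sum>w\<in>PiE {..<l} (\<lambda>_. Om q). \<Prod>i\<in>I. mprod w l (r i))"
    unfolding mprod_def by (subst prod.swap) (rule refl)
  finally show ?thesis .
qed

definition PJ :: "nat set \<Rightarrow> nat set \<Rightarrow> (nat \<Rightarrow> nat) \<Rightarrow> nat \<Rightarrow> (nat \<Rightarrow> nat \<Rightarrow> real) \<Rightarrow> real" where
  "PJ I J w l r = (\<Prod>i\<in>I. if i \<in> J then mprod w l (r i) else 1)"

lemma PJ_bounds:
  assumes "r \<in> space (PiM I (\<lambda>_. \<pi>))" "\<pi> \<in> centred_measures q"
  shows "\<bar>PJ I J w l r\<bar> \<le> 1"
proof -
  have "\<And>i. i \<in> I \<Longrightarrow> r i \<in> distrs q" using assms by (auto simp: space_PiM cm_space)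
  then have mb: "\<And>i. i \<in> I \<Longrightarrow> 0 \<le> mprod w l (r i) \<and> mprod w l (r i) \<le> 1" using mprod_bounds by blast
  then have "0 \<le> PJ I J w l r \<and> PJ I J w l r \<le> 1"
    unfolding PJ_def by (auto intro!: prod_nonneg prod_le_1)
  then show ?thesis by simp
qed

lemma PJ_meas:
  assumes "\<pi> \<in> centred_measures q"
  shows "PJ I J w l \<in> borel_measurable (PiM I (\<lambda>_. \<pi>))"
proof -
  have m: "mprod w l \<in> borel_measurable \<pi>" by (rule mprod_meas[OF assms])
  show ?thesis unfolding PJ_def[abs_def]
  proof (intro borel_measurable_prod)
    fix i assume i: "i \<in> I"
    have "(\<lambda>r. mprod w l (r i)) \<in> borel_measurable (PiM I (\<lambda>_. \<pi>))"
      using measurable_compose[OF measurable_component_singleton[OF i] m] .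
    then show "(\<lambda>r. if i \<in> J then mprod w l (r i) else 1) \<in> borel_measurable (PiM I (\<lambda>_. \<pi>))"
      by simp
  qed
qed

lemma PJ_integral:
  assumes fin: "finite I" and c: "\<pi> \<in> centred_measures q"
  shows "(\<integral>r. PJ I J w l r \<partial>PiM I (\<lambda>_. \<pi>)) = (\<integral>\<rho>. mprod w l \<rho> \<partial>\<pi>) ^ card (I \<inter> J)"
proof -
  interpret P: prob_space \<pi> by (rule cm_prob[OF c])
  interpret PS: product_sigma_finite "\<lambda>_. \<pi>"
    unfolding product_sigma_finite_def by (simp add: prob_space_imp_sigma_finite cm_prob[OF c])
  have im: "integrable \<pi> (mprod w l)"
  proof (rule P.integrable_const_bound[of _ 1])
    show "AE x in \<pi>. norm (mprod w l x) \<le> 1"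
      using mprod_bounds by (intro AE_I2) (auto simp: cm_space[OF c])
    show "mprod w l \<in> borel_measurable \<pi>" by (rule mprod_meas[OF c])
  qed
  have "(\<integral>r. PJ I J w l r \<partial>PiM I (\<lambda>_. \<pi>))
      = (\<Prod>i\<in>I. integral\<^sup>L \<pi> (\<lambda>\<rho>. if i \<in> J then mprod w l \<rho> else 1))"
    unfolding PJ_def
  proof (rule PS.product_integral_prod[OF fin])
    fix i show "integrable \<pi> (\<lambda>\<rho>. if i \<in> J then mprod w l \<rho> else 1)"
      by (cases "i \<in> J") (simp_all add: im)
  qed
  also have "\<dots> = (\<Prod>i\<in>I. if i \<in> J then integral\<^sup>L \<pi> (mprod w l) else 1)"
    by (intro prod.cong refl) (auto simp: P.prob_space)
  also have "\<dots> = integral\<^sup>L \<pi> (mprod w l) ^ card (I \<inter> J)"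
    using fin by (simp add: prod.If_cases Int_def)
  finally show ?thesis .
qed




lemma one_minus:
  assumes k1: "k \<ge> 1" and r: "\<forall>i\<in>{1..k}. r i \<in> distrs q"
  shows "1 - (\<Sum>\<tau>\<in>tuples k q. psi_kq k q \<tau> * (\<Prod>i\<in>{1..k}. r i (\<tau> i))) = (\<Sum>x\<in>Om q. \<Prod>i\<in>{1..k}. r i x)"
proof -
  have "(\<Prod>i\<in>{1..k}. \<Sum>x\<in>Om q. r i x) = (\<Prod>i\<in>{1..k}. (1::real))"
    using r by (intro prod.cong refl) (simp add: distrs_def)
  then show ?thesis unfolding sum_psi[OF k1] by simp
qed

lemma prod_split1:
  fixes k :: nat and r r' :: "nat \<Rightarrow> nat \<Rightarrow> real" and \<tau> :: "nat \<Rightarrow> nat"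
  assumes k1: "k \<ge> 1"
  shows "(\<Prod>i\<in>{1..k}. (if i = 1 then r i else r' i) (\<tau> i)) = r 1 (\<tau> 1) * (\<Prod>i\<in>{2..k}. r' i (\<tau> i))"
proof -
  have e: "{1..k} = insert 1 {2..k}" using k1 by auto
  have "(\<Prod>i\<in>{1..k}. (if i = 1 then r i else r' i) (\<tau> i))
      = r 1 (\<tau> 1) * (\<Prod>i\<in>{2..k}. (if i = 1 then r i else r' i) (\<tau> i))"
    unfolding e by (subst prod.insert) auto
  also have "(\<Prod>i\<in>{2..k}. (if i = 1 then r i else r' i) (\<tau> i)) = (\<Prod>i\<in>{2..k}. r' i (\<tau> i))"
    by (intro prod.cong refl) auto
  finally show ?thesis .
qed

lemma PJ_split:
  fixes r r' :: "nat \<Rightarrow> nat \<Rightarrow> real"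
  shows "(\<Prod>i\<in>I. mprod w l (if i = 1 then r i else r' i)) = PJ I {1} w l r * PJ I (I - {1}) w l r'"
  unfolding PJ_def prod.distrib[symmetric] by (intro prod.cong refl) auto

lemma PJ_all: "PJ I I w l r = (\<Prod>i\<in>I. mprod w l (r i))"
  unfolding PJ_def by (intro prod.cong refl) auto

lemma PJ_none: "PJ I {} w l r = 1"
  unfolding PJ_def by simp

definition Wl :: "nat \<Rightarrow> nat \<Rightarrow> (nat \<Rightarrow> nat) set" where
  "Wl l q = PiE {..<l} (\<lambda>_. Om q)"

definition Sg :: "nat \<Rightarrow> nat \<Rightarrow> nat \<Rightarrow> nat set \<Rightarrow> nat set \<Rightarrow> (nat \<Rightarrow> nat \<Rightarrow> real) \<times> (nat \<Rightarrow> nat \<Rightarrow> real) \<Rightarrow> real" where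
  "Sg k q l J J' z = (\<Sum>w\<in>Wl l q. PJ {1..k} J w l (fst z) * PJ {1..k} J' w l (snd z))"

lemma f_pointwise:
  assumes k1: "k \<ge> 1" and r: "\<forall>i\<in>{1..k}. r i \<in> distrs q" and r': "\<forall>i\<in>{1..k}. r' i \<in> distrs q"
  shows "(1 - (\<Sum>\<tau>\<in>tuples k q. psi_kq k q \<tau> * (\<Prod>i\<in>{1..k}. r i (\<tau> i)))) ^ l
              + real (k - 1) * (1 - (\<Sum>\<tau>\<in>tuples k q. psi_kq k q \<tau> * (\<Prod>i\<in>{1..k}. r' i (\<tau> i)))) ^ l
              - real k * (1 - (\<Sum>\<tau>\<in>tuples k q. psi_kq k q \<tau> * (r 1 (\<tau> 1) * (\<Prod>i\<in>{2..k}. r' i (\<tau> i))))) ^ l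
       = Sg k q l {1..k} {} (r, r') + real (k - 1) * Sg k q l {} {1..k} (r, r') - real k * Sg k q l {1} ({1..k} - {1}) (r, r')"
proof -
  define rr where "rr = (\<lambda>i. if i = 1 then r i else r' i)"
  have rr: "\<forall>i\<in>{1..k}. rr i \<in> distrs q" using r r' by (simp add: rr_def)
  have t1: "(1 - (\<Sum>\<tau>\<in>tuples k q. psi_kq k q \<tau> * (\<Prod>i\<in>{1..k}. r i (\<tau> i)))) ^ l = Sg k q l {1..k} {} (r, r')"
    unfolding one_minus[OF k1 r] pow_expand[OF finite_atLeastAtMost] Sg_def Wl_def PJ_none PJ_all by simp
  have t2: "(1 - (\<Sum>\<tau>\<in>tuples k q. psi_kq k q \<tau> * (\<Prod>i\<in>{1..k}. r' i (\<tau> i)))) ^ l = Sg k q l {} {1..k} (r, r')"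
    unfolding one_minus[OF k1 r'] pow_expand[OF finite_atLeastAtMost] Sg_def Wl_def PJ_none PJ_all by simp
  have a: "(\<Sum>\<tau>\<in>tuples k q. psi_kq k q \<tau> * (r 1 (\<tau> 1) * (\<Prod>i\<in>{2..k}. r' i (\<tau> i))))
      = (\<Sum>\<tau>\<in>tuples k q. psi_kq k q \<tau> * (\<Prod>i\<in>{1..k}. rr i (\<tau> i)))"
    unfolding rr_def using prod_split1[OF k1, of r r'] by simp
  have c: "(\<Sum>x\<in>Om q. \<Prod>i\<in>{1..k}. rr i x) ^ l = (\<Sum>w\<in>Wl l q. \<Prod>i\<in>{1..k}. mprod w l (rr i))"
    unfolding Wl_def by (rule pow_expand[OF finite_atLeastAtMost])
  have d: "\<And>w. (\<Prod>i\<in>{1..k}. mprod w l (rr i)) = PJ {1..k} {1} w l r * PJ {1..k} ({1..k} - {1}) w l r'"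
    unfolding rr_def by (rule PJ_split)
  have t3: "(1 - (\<Sum>\<tau>\<in>tuples k q. psi_kq k q \<tau> * (r 1 (\<tau> 1) * (\<Prod>i\<in>{2..k}. r' i (\<tau> i))))) ^ l
      = Sg k q l {1} ({1..k} - {1}) (r, r')"
    unfolding a one_minus[OF k1 rr] c d Sg_def by simp
  show ?thesis unfolding t1 t2 t3 ..
qed




lemma Sg_int:
  assumes c: "\<pi> \<in> centred_measures q" and c': "\<pi>' \<in> centred_measures q"
  shows "integrable (PiM {1..k} (\<lambda>_. \<pi>) \<Otimes>\<^sub>M PiM {1..k} (\<lambda>_. \<pi>')) (Sg k q l J J')"
    and "(\<integral>z. Sg k q l J J' z \<partial>(PiM {1..k} (\<lambda>_. \<pi>) \<Otimes>\<^sub>M PiM {1..k} (\<lambda>_. \<pi>')))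
       = (\<Sum>w\<in>Wl l q. (\<integral>\<rho>. mprod w l \<rho> \<partial>\<pi>) ^ card ({1..k} \<inter> J) * (\<integral>\<rho>. mprod w l \<rho> \<partial>\<pi>') ^ card ({1..k} \<inter> J'))"
proof -
  let ?A = "PiM {1..k} (\<lambda>_. \<pi>)" and ?B = "PiM {1..k} (\<lambda>_. \<pi>')"
  have PA: "prob_space ?A" by (rule prob_space_PiM) (rule cm_prob[OF c])
  have PB: "prob_space ?B" by (rule prob_space_PiM) (rule cm_prob[OF c'])
  have pp1: "integrable (?A \<Otimes>\<^sub>M ?B) (\<lambda>z. PJ {1..k} J w l (fst z) * PJ {1..k} J' w l (snd z))" for w
    by (rule pair_prod_integral(1)[OF PA PB]) (auto intro: PJ_meas[OF c] PJ_meas[OF c'] PJ_bounds[OF _ c] PJ_bounds[OF _ c'])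
  have pp2: "(\<integral>z. PJ {1..k} J w l (fst z) * PJ {1..k} J' w l (snd z) \<partial>(?A \<Otimes>\<^sub>M ?B))
     = integral\<^sup>L ?A (PJ {1..k} J w l) * integral\<^sup>L ?B (PJ {1..k} J' w l)" for w
    by (rule pair_prod_integral(2)[OF PA PB]) (auto intro: PJ_meas[OF c] PJ_meas[OF c'] PJ_bounds[OF _ c] PJ_bounds[OF _ c'])
  have e: "Sg k q l J J' = (\<lambda>z. \<Sum>w\<in>Wl l q. PJ {1..k} J w l (fst z) * PJ {1..k} J' w l (snd z))"
    by (simp add: Sg_def[abs_def])
  show "integrable (?A \<Otimes>\<^sub>M ?B) (Sg k q l J J')"
    unfolding e
  proof (rule Bochner_Integration.integrable_sum)
    fix w show "integrable (?A \<Otimes>\<^sub>M ?B) (\<lambda>z. PJ {1..k} J w l (fst z) * PJ {1..k} J' w l (snd z))"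
      by (rule pp1)
  qed
  have "(\<integral>z. Sg k q l J J' z \<partial>(?A \<Otimes>\<^sub>M ?B))
      = (\<Sum>w\<in>Wl l q. (\<integral>z. PJ {1..k} J w l (fst z) * PJ {1..k} J' w l (snd z) \<partial>(?A \<Otimes>\<^sub>M ?B)))"
    unfolding e by (intro Bochner_Integration.integral_sum pp1)
  also have "\<dots> = (\<Sum>w\<in>Wl l q. (\<integral>\<rho>. mprod w l \<rho> \<partial>\<pi>) ^ card ({1..k} \<inter> J) * (\<integral>\<rho>. mprod w l \<rho> \<partial>\<pi>') ^ card ({1..k} \<inter> J'))"
  proof (intro sum.cong refl)
    fix w
    show "(\<integral>z. PJ {1..k} J w l (fst z) * PJ {1..k} J' w l (snd z) \<partial>(?A \<Otimes>\<^sub>M ?B))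
       = (\<integral>\<rho>. mprod w l \<rho> \<partial>\<pi>) ^ card ({1..k} \<inter> J) * (\<integral>\<rho>. mprod w l \<rho> \<partial>\<pi>') ^ card ({1..k} \<inter> J')"
      unfolding pp2 PJ_integral[OF finite_atLeastAtMost c] PJ_integral[OF finite_atLeastAtMost c'] ..
  qed
  finally show "(\<integral>z. Sg k q l J J' z \<partial>(?A \<Otimes>\<^sub>M ?B))
       = (\<Sum>w\<in>Wl l q. (\<integral>\<rho>. mprod w l \<rho> \<partial>\<pi>) ^ card ({1..k} \<inter> J) * (\<integral>\<rho>. mprod w l \<rho> \<partial>\<pi>') ^ card ({1..k} \<inter> J'))" .
qed

lemma final_ineq:
  fixes X Y :: real
  assumes "X \<ge> 0" "Y \<ge> 0" "k \<ge> 2"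
  shows "0 \<le> X ^ k + real (k - 1) * Y ^ k - real k * (X * Y ^ (k - 1))"
proof -
  have t: "Y ^ k + real k * Y ^ (k - 1) * (X - Y) \<le> X ^ k" using assms by (intro tangent) auto
  have "Y ^ k = Y * Y ^ (k - 1)" using assms(3) by (metis Suc_diff_1 le_trans one_le_numeral power_Suc less_le_trans zero_less_one)
  moreover have "real (k - 1) = real k - 1" using assms(3) by simp
  ultimately show ?thesis using t by (simp add: algebra_simps)
qed

lemma POS:
  assumes k2: "k \<ge> 2"
  shows "prop_POS k q (return_pmf (psi_kq k q))"
  unfolding prop_POS_def Let_def
proof (intro ballI allI impI)
  fix \<pi> \<pi>' and l :: nat assume c: "\<pi> \<in> centred_measures q" and c': "\<pi>' \<in> centred_measures q" and l: "2 \<le> l"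
  have k1: "k \<ge> 1" using k2 by simp
  let ?A = "PiM {1..k} (\<lambda>_. \<pi>)" and ?B = "PiM {1..k} (\<lambda>_. \<pi>')"
  let ?M1 = "?A \<Otimes>\<^sub>M ?B"
  define g where "g = (\<lambda>z. Sg k q l {1..k} {} z + real (k - 1) * Sg k q l {} {1..k} z - real k * Sg k q l {1} ({1..k} - {1}) z)"
  define f where "f = (\<lambda>((r, r'), \<psi>).
              (1 - (\<Sum>\<tau>\<in>tuples k q. \<psi> \<tau> * (\<Prod>i\<in>{1..k}. r i (\<tau> i)))) ^ l
              + real (k - 1) * (1 - (\<Sum>\<tau>\<in>tuples k q. \<psi> \<tau> * (\<Prod>i\<in>{1..k}. r' i (\<tau> i)))) ^ l
              - real k * (1 - (\<Sum>\<tau>\<in>tuples k q. \<psi> \<tau> * (r 1 (\<tau> 1) * (\<Prod>i\<in>{2..k}. r' i (\<tau> i))))) ^ l)"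
  let ?M = "?M1 \<Otimes>\<^sub>M measure_pmf (return_pmf (psi_kq k q))"
  have m1: "(\<lambda>z. fst (fst z) i \<omega>) \<in> borel_measurable ?M" if i: "i \<in> {1..k}" for i \<omega>
    using measurable_compose[OF measurable_compose[OF measurable_compose[OF measurable_fst measurable_fst]
        measurable_component_singleton[OF i]] cm_eval[OF c]] .
  have m2: "(\<lambda>z. snd (fst z) i \<omega>) \<in> borel_measurable ?M" if i: "i \<in> {1..k}" for i \<omega>
    using measurable_compose[OF measurable_compose[OF measurable_compose[OF measurable_fst measurable_snd]
        measurable_component_singleton[OF i]] cm_eval[OF c']] .
  have ev: "(\<lambda>\<psi>::cfun. \<psi> \<tau>) \<in> borel_measurable (measure_pmf (return_pmf (psi_kq k q)))" for \<tau> by simp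
  have m3: "(\<lambda>z. snd z \<tau>) \<in> borel_measurable ?M" for \<tau>
    using measurable_compose[OF measurable_snd ev] .
  have feq: "f = (\<lambda>z.
              (1 - (\<Sum>\<tau>\<in>tuples k q. snd z \<tau> * (\<Prod>i\<in>{1..k}. fst (fst z) i (\<tau> i)))) ^ l
              + real (k - 1) * (1 - (\<Sum>\<tau>\<in>tuples k q. snd z \<tau> * (\<Prod>i\<in>{1..k}. snd (fst z) i (\<tau> i)))) ^ l
              - real k * (1 - (\<Sum>\<tau>\<in>tuples k q. snd z \<tau> * (fst (fst z) 1 (\<tau> 1) * (\<Prod>i\<in>{2..k}. snd (fst z) i (\<tau> i))))) ^ l)"
    unfolding f_def by (intro ext) (simp split: prod.split)
  have meas: "f \<in> borel_measurable ?M"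
    unfolding feq
    by (intro borel_measurable_add borel_measurable_diff borel_measurable_times borel_measurable_power
        borel_measurable_sum borel_measurable_prod borel_measurable_const m1 m2 m3) (use k1 in auto)
  have PM1: "prob_space ?M1"
    by (intro prob_space_pair prob_space_PiM cm_prob[OF c] cm_prob[OF c'])
  have fg: "f (x, psi_kq k q) = g x" if x: "x \<in> space ?M1" for x
  proof -
    obtain r r' where x': "x = (r, r')" by (cases x)
    have r: "\<forall>i\<in>{1..k}. r i \<in> distrs q" and r': "\<forall>i\<in>{1..k}. r' i \<in> distrs q"
      using x unfolding x' by (auto simp: space_pair_measure space_PiM cm_space[OF c] cm_space[OF c'])
    show ?thesis unfolding x' f_def g_def using f_pointwise[OF k1 r r', of l] by simp
  qed
  have intg: "integrable ?M1 g"
    unfolding g_def by (intro Bochner_Integration.integrable_diff Bochner_Integration.integrable_add Bochner_Integration.integrable_mult_right Sg_int(1)[OF c c'])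
  have intf: "integrable ?M1 (\<lambda>x. f (x, psi_kq k q))"
  proof -
    have "integrable ?M1 (\<lambda>x. f (x, psi_kq k q)) \<longleftrightarrow> integrable ?M1 g"
      using fg by (intro Bochner_Integration.integrable_cong) auto
    then show ?thesis using intg by simp
  qed
  note PR = pair_return_integral[OF PM1 meas intf]
  have "(\<integral>x. f x \<partial>(?M1 \<Otimes>\<^sub>M measure_pmf (return_pmf (psi_kq k q)))) = (\<integral>x. g x \<partial>?M1)"
    unfolding PR(2) using fg by (intro Bochner_Integration.integral_cong) auto
  also have "\<dots> = (\<integral>x. Sg k q l {1..k} {} x \<partial>?M1) + real (k - 1) * (\<integral>x. Sg k q l {} {1..k} x \<partial>?M1)
      - real k * (\<integral>x. Sg k q l {1} ({1..k} - {1}) x \<partial>?M1)"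
    unfolding g_def using Sg_int(1)[OF c c'] by simp
  also have "\<dots> = (\<Sum>w\<in>Wl l q. (\<integral>\<rho>. mprod w l \<rho> \<partial>\<pi>) ^ k + real (k - 1) * (\<integral>\<rho>. mprod w l \<rho> \<partial>\<pi>') ^ k
      - real k * ((\<integral>\<rho>. mprod w l \<rho> \<partial>\<pi>) * (\<integral>\<rho>. mprod w l \<rho> \<partial>\<pi>') ^ (k - 1)))"
  proof -
    have e4: "{1..k} \<inter> ({1..k} - {1::nat}) = {1..k} - {1}" by auto
    have c4: "card ({1..k} \<inter> ({1..k} - {1::nat})) = k - 1"
      unfolding e4 using k1 by (simp add: card_Diff_singleton)
    have c1: "card ({1..k} \<inter> {1..k}) = k" "card ({1..k} \<inter> {}) = 0" "card ({1..k} \<inter> {1::nat}) = 1"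
      "card ({1..k} \<inter> ({1..k} - {1::nat})) = k - 1" using k1 c4 by auto
    show ?thesis unfolding Sg_int(2)[OF c c'] c1
      by (simp add: sum.distrib sum_subtractf sum_distrib_left)
  qed
  also have "0 \<le> \<dots>"
  proof (intro sum_nonneg final_ineq[OF _ _ k2])
    fix w
    show "0 \<le> (\<integral>\<rho>. mprod w l \<rho> \<partial>\<pi>)"
      using mprod_bounds by (intro integral_nonneg_AE AE_I2) (auto simp: cm_space[OF c])
    show "0 \<le> (\<integral>\<rho>. mprod w l \<rho> \<partial>\<pi>')"
      using mprod_bounds by (intro integral_nonneg_AE AE_I2) (auto simp: cm_space[OF c'])
  qed
  finally have "0 \<le> (\<integral>x. f x \<partial>(?M1 \<Otimes>\<^sub>M measure_pmf (return_pmf (psi_kq k q))))" .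
  then show "integrable (?M1 \<Otimes>\<^sub>M measure_pmf (return_pmf (psi_kq k q))) f \<and>
      0 \<le> (\<integral>x. f x \<partial>(?M1 \<Otimes>\<^sub>M measure_pmf (return_pmf (psi_kq k q))))"
    using PR(1) unfolding f_def by simp
qed


theorem mainTheorem14:
  fixes k q :: nat
  assumes "k \<ge> 2" and "q \<ge> 2" and "k + q > 4"
  shows "prop_SYM k q {psi_kq k q} (return_pmf (psi_kq k q))
       \<and> prop_BAL k q (return_pmf (psi_kq k q))
       \<and> prop_MIN k q (return_pmf (psi_kq k q))
       \<and> prop_POS k q (return_pmf (psi_kq k q))
       \<and> prop_UNI k q {psi_kq k q}"
proof -
  have q1: "q \<ge> 1" using assms(2) by simp
  show ?thesis
    using SYM[OF assms(1) q1] BAL[OF assms(1) q1] MIN[OF assms(1) q1] POS[OF assms(1)] UNI[OF assms]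
    by blast
qed

end
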